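(* Let $\alpha\in(1,2)$ and let $p\ge2$ be an integer. There is a constant $C^L_{p,\alpha}$ depending only on $p$ and $\alpha$ such that for every $n\ge1$, $$\|n^{-\alpha}A_n^L\|_q\le C^L_{p,\alpha},\qquad q\in\{1,2,\infty\}.$$
   Context: Fix integers $p\ge2$, $n\ge1$. The uniform open knot sequence on $[0,1]$ is $\xi_1=\dots=\xi_{p+1}=0$, $\xi_{i+p+1}=i/n$ for $i=0,\dots,n$, $\xi_{p+n+1}=\dots=\xi_{2p+n+1}=1$. The B-splines are defined by $N^0_i=\mathbf 1_{[\xi_i,\xi_{i+1})}$ and $N^k_i(x)=\frac{x-\xi_i}{\xi_{i+k}-\xi_i}N^{k-1}_i(x)+\frac{\xi_{i+k+1}-x}{\xi_{i+k+1}-\xi_{i+1}}N^{k-1}_{i+1}(x)$ (fractions with zero denominator are zero); $N^p_i$, $i=1,\dots,n+p$, are the degree-$p$ B-splines. The Greville abscissae are $\eta_i=\frac{\xi_{i+1}+\dots+\xi_{i+p}}{p}$, $i=2,\dots,n+p-1$. For $\alpha\in(1,2)$, $D^\alpha_{0,x}u(x)=\frac{1}{\Gamma(2-\alpha)}\frac{d^2}{dx^2}\int_0^x(x-y)^{1-\alpha}u(y)\,dy$. $A_n^L$ is the $(n+p-2)\times(n+p-2)$ matrix with $(A_n^L)_{i,j}=D^\alpha_{0,x}N^p_{j+1}(\eta_{i+1})$. $\|\cdot\|_1$, $\|\cdot\|_\infty$ are the maximum absolute column sum and row sum norms, $\|\cdot\|_2$ the spectral norm. *)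

theory Defs
  imports "HOL-Analysis.Analysis"
begin

text \<open>Uniform open knot vector on [0,1], 1-indexed: knot p n i for i = 1..2p+n+1.\<close>
definition knot :: "nat \<Rightarrow> nat \<Rightarrow> nat \<Rightarrow> real" where
  "knot p n i = (if i \<le> p + 1 then 0
                 else if i \<le> p + n + 1 then (real i - real p - 1) / real n
                 else 1)"

text \<open>B-splines via Cox-de Boor recursion; division by zero yields 0 in Isabelle,
  matching the convention that fractions with zero denominator are zero.\<close>
fun bspline :: "nat \<Rightarrow> nat \<Rightarrow> nat \<Rightarrow> nat \<Rightarrow> real \<Rightarrow> real" where
  "bspline p n 0 i x = (if knot p n i \<le> x \<and> x < knot p n (Suc i) then 1 else 0)"
| "bspline p n (Suc k) i x =
     (x - knot p n i) / (knot p n (i + Suc k) - knot p n i) * bspline p n k i x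
   + (knot p n (i + Suc k + 1) - x) / (knot p n (i + Suc k + 1) - knot p n (i + 1))
       * bspline p n k (Suc i) x"

definition greville :: "nat \<Rightarrow> nat \<Rightarrow> nat \<Rightarrow> real" where
  "greville p n i = (\<Sum>k = i + 1..i + p. knot p n k) / real p"

definition RL_deriv :: "real \<Rightarrow> (real \<Rightarrow> real) \<Rightarrow> real \<Rightarrow> real" where
  "RL_deriv \<alpha> u x = (1 / Gamma (2 - \<alpha>)) *
     (deriv ^^ 2) (\<lambda>t. integral {0..t} (\<lambda>y. (t - y) powr (1 - \<alpha>) * u y)) x"

text \<open>The matrix A_n^L, entries indexed by i, j in {1..n+p-2}.\<close>
definition AL :: "nat \<Rightarrow> nat \<Rightarrow> real \<Rightarrow> nat \<Rightarrow> nat \<Rightarrow> real" where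
  "AL p n \<alpha> i j = RL_deriv \<alpha> (bspline p n p (j + 1)) (greville p n (i + 1))"

definition norm1 :: "nat \<Rightarrow> (nat \<Rightarrow> nat \<Rightarrow> real) \<Rightarrow> real" where
  "norm1 N M = Max ((\<lambda>j. \<Sum>i = 1..N. \<bar>M i j\<bar>) ` {1..N})"

definition norminf :: "nat \<Rightarrow> (nat \<Rightarrow> nat \<Rightarrow> real) \<Rightarrow> real" where
  "norminf N M = Max ((\<lambda>i. \<Sum>j = 1..N. \<bar>M i j\<bar>) ` {1..N})"

definition norm2 :: "nat \<Rightarrow> (nat \<Rightarrow> nat \<Rightarrow> real) \<Rightarrow> real" where
  "norm2 N M = Sup {sqrt (\<Sum>i = 1..N. (\<Sum>j = 1..N. M i j * x j)\<^sup>2) | x.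
                      (\<Sum>j = 1..N. (x j)\<^sup>2) \<le> 1}"

end

theory Submission
  imports Defs
begin

lemma knot_eq: "n \<ge> 1 \<Longrightarrow> knot p n m = real (min (m - (p+1)) n) / real n"
  unfolding knot_def by (auto simp: min_def of_nat_diff)

lemma knot_mono: assumes "n \<ge> 1" "m \<le> m'" shows "knot p n m \<le> knot p n m'"
  using assms by (simp add: knot_eq divide_right_mono)

lemma knot_nonneg: "n \<ge> 1 \<Longrightarrow> 0 \<le> knot p n m"
  by (simp add: knot_eq)

lemma knot_le1: "n \<ge> 1 \<Longrightarrow> knot p n m \<le> 1"
  by (simp add: knot_eq)

lemma knot_zero_iff: "n \<ge> 1 \<Longrightarrow> knot p n m = 0 \<longleftrightarrow> m \<le> p + 1"
  by (auto simp: knot_eq)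

lemma knot_gap:
  assumes "n \<ge> 1" "m \<le> m'" "knot p n m' - knot p n m \<noteq> 0"
  shows "knot p n m' - knot p n m \<ge> 1 / real n"
proof -
  define c where "c = min (m - (p+1)) n"
  define c' where "c' = min (m' - (p+1)) n"
  have le: "c \<le> c'" using assms(2) by (auto simp: c_def c'_def)
  have e: "knot p n m' - knot p n m = (real c' - real c) / real n"
    unfolding c_def c'_def knot_eq[OF assms(1)] by (rule diff_divide_distrib[symmetric])
  have ne: "c \<noteq> c'" using assms(3) unfolding e by auto
  hence "real c' - real c \<ge> 1" using le by linarith
  hence "1 / real n \<le> (real c' - real c) / real n" by (rule divide_right_mono) simp
  thus ?thesis unfolding e .
qed

lemma div_gap_bound:
  assumes "n \<ge> 1" "m \<le> m'"
  shows "\<bar>c / (knot p n m' - knot p n m)\<bar> \<le> \<bar>c\<bar> * n"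
proof (cases "knot p n m' - knot p n m = 0")
  case True thus ?thesis by simp
next
  case False
  define d where "d = knot p n m' - knot p n m"
  have g: "d \<ge> 1 / real n" using knot_gap[OF assms False] unfolding d_def .
  have "0 < 1 / real n" using assms(1) by simp
  hence pos: "d > 0" using g by linarith
  have "\<bar>c / d\<bar> = \<bar>c\<bar> / d" using pos by simp
  also have "\<dots> = \<bar>c\<bar> * (1 / d)" by simp
  also have "\<dots> \<le> \<bar>c\<bar> * n"
  proof (rule mult_left_mono)
    have nd: "1 \<le> d * real n" using g assms(1) by (simp add: divide_le_eq)
    thus "1 / d \<le> real n" using pos by (simp add: divide_le_eq mult.commute)
  qed simp
  finally show ?thesis unfolding d_def .
qed

lemma knot_simple:
  assumes "n \<ge> 1" "0 < knot p n m" "knot p n m < 1"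
  shows "knot p n (m - 1) < knot p n m \<and> knot p n m < knot p n (m+1)"
proof -
  have a1: "0 < real (min (m - (p+1)) n)" using assms(1,2) by (simp add: knot_eq zero_less_divide_iff)
  have a2: "real (min (m - (p+1)) n) < real n" using assms(1,3) by (simp add: knot_eq divide_less_eq)
  have a: "0 < min (m - (p+1)) n" "min (m - (p+1)) n < n" using a1 a2 by linarith+
  hence "m - (p+1) < n" "0 < m - (p+1)" by auto
  hence "min (m - 1 - (p+1)) n = min (m - (p+1)) n - 1" "min (m + 1 - (p+1)) n = min (m - (p+1)) n + 1"
    by auto
  hence e: "knot p n (m - 1) = (real (min (m - (p+1)) n) - 1) / n"
       "knot p n (m + 1) = (real (min (m - (p+1)) n) + 1) / n"
    using a by (simp_all add: knot_eq[OF assms(1)] of_nat_diff)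
  have n0: "0 < real n" using assms(1) by simp
  have e0: "knot p n m = real (min (m - (p+1)) n) / n" by (rule knot_eq[OF assms(1)])
  show ?thesis unfolding e e0 using n0 by (simp add: divide_strict_right_mono)
qed

lemma knot_range_finite: "n \<ge> 1 \<Longrightarrow> finite (range (knot p n))"
proof -
  assume n: "n \<ge> 1"
  have "knot p n m \<in> (\<lambda>k. real k / real n) ` {..n}" for m
    by (rule image_eqI[where x="min (m - (p+1)) n"]) (simp_all add: knot_eq[OF n])
  hence "range (knot p n) \<subseteq> (\<lambda>k. real k / real n) ` {..n}" by auto
  thus ?thesis by (rule finite_subset) auto
qed

lemma bs_supp:
  assumes "n \<ge> 1"
  shows "bspline p n k i x \<noteq> 0 \<Longrightarrow> knot p n i \<le> x \<and> x < knot p n (i+k+1)"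
proof (induction k arbitrary: i)
  case 0 thus ?case by (auto split: if_splits)
next
  case (Suc k)
  have m1: "knot p n (i+k+1) \<le> knot p n (i + Suc k + 1)" by (rule knot_mono[OF assms]) simp
  have m2: "knot p n i \<le> knot p n (i+1)" by (rule knot_mono[OF assms]) simp
  from Suc.prems have "bspline p n k i x \<noteq> 0 \<or> bspline p n k (Suc i) x \<noteq> 0" by auto
  thus ?case
  proof
    assume "bspline p n k i x \<noteq> 0"
    from Suc.IH[OF this] m1 show ?thesis by auto
  next
    assume "bspline p n k (Suc i) x \<noteq> 0"
    from Suc.IH[OF this] m2 show ?thesis by auto
  qed
qed

lemma weight_bound:
  fixes num den M c :: real
  assumes "\<bar>M\<bar> \<le> c" "M \<noteq> 0 \<Longrightarrow> 0 \<le> num \<and> num \<le> den"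
  shows "\<bar>num / den * M\<bar> \<le> c"
proof (cases "M = 0")
  case True thus ?thesis using assms(1) by simp
next
  case False
  with assms(2) have h: "0 \<le> num" "num \<le> den" by auto
  have "\<bar>num / den\<bar> \<le> 1"
  proof (cases "den = 0")
    case False with h show ?thesis by (simp add: abs_div_pos divide_le_eq_1)
  qed simp
  hence "\<bar>num / den\<bar> * \<bar>M\<bar> \<le> 1 * c" using assms(1) by (intro mult_mono) auto
  thus ?thesis by (simp add: abs_mult)
qed

lemma bs_bound:
  fixes x :: real
  assumes "n \<ge> 1"
  shows "\<bar>bspline p n k i x\<bar> \<le> 2 ^ k"
proof (induction k arbitrary: i)
  case 0 thus ?case by simp
next
  case (Suc k)
  have a: "\<bar>(x - knot p n i) / (knot p n (i + Suc k) - knot p n i) * bspline p n k i x\<bar> \<le> 2^k"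
    apply (rule weight_bound[OF Suc.IH])
    using bs_supp[OF assms, where p=p and k=k and i=i and x=x] by auto
  have b: "\<bar>(knot p n (i + Suc k + 1) - x) / (knot p n (i + Suc k + 1) - knot p n (i + 1)) * bspline p n k (Suc i) x\<bar> \<le> 2^k"
    apply (rule weight_bound[OF Suc.IH])
    using bs_supp[OF assms, where p=p and k=k and i="Suc i" and x=x] by auto
  have e: "bspline p n (Suc k) i x = (x - knot p n i) / (knot p n (i + Suc k) - knot p n i) * bspline p n k i x
     + (knot p n (i + Suc k + 1) - x) / (knot p n (i + Suc k + 1) - knot p n (i + 1)) * bspline p n k (Suc i) x"
    by (simp only: bspline.simps)
  have p2: "(2::real)^Suc k = 2^k + 2^k" by simp
  show ?case unfolding e by (rule order_trans[OF abs_triangle_ineq]) (use a b p2 in linarith)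
qed

lemma bs_at0:
  assumes "n \<ge> 1"
  shows "bspline p n k i 0 \<noteq> 0 \<Longrightarrow> i + k = p + 1"
proof (induction k arbitrary: i)
  case 0
  hence "knot p n i \<le> 0" "0 < knot p n (Suc i)" by (auto split: if_splits)
  hence "knot p n i = 0" "knot p n (Suc i) \<noteq> 0" using knot_nonneg[OF assms] by (auto intro: antisym)
  thus ?case using knot_zero_iff[OF assms] by auto
next
  case (Suc k)
  show ?case
  proof (cases "bspline p n k i 0 = 0")
    case True
    with Suc.prems have "bspline p n k (Suc i) 0 \<noteq> 0" by auto
    from Suc.IH[OF this] show ?thesis by simp
  next
    case False
    from Suc.IH[OF this] have "i \<le> p + 1" by simp
    hence "knot p n i = 0" using knot_zero_iff[OF assms] by auto
    hence "bspline p n k (Suc i) 0 \<noteq> 0" using Suc.prems by auto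
    from Suc.IH[OF this] show ?thesis by simp
  qed
qed

definition bsd :: "nat \<Rightarrow> nat \<Rightarrow> nat \<Rightarrow> nat \<Rightarrow> real \<Rightarrow> real" where
 "bsd p n k i x = real k * (bspline p n (k-1) i x / (knot p n (i+k) - knot p n i)
     - bspline p n (k-1) (i+1) x / (knot p n (i+k+1) - knot p n (i+1)))"

definition bsd2 :: "nat \<Rightarrow> nat \<Rightarrow> nat \<Rightarrow> nat \<Rightarrow> real \<Rightarrow> real" where
 "bsd2 p n k i x = real k * (bsd p n (k-1) i x / (knot p n (i+k) - knot p n i)
     - bsd p n (k-1) (i+1) x / (knot p n (i+k+1) - knot p n (i+1)))"

lemma alg_id:
  fixes x k0 k1 kk1 kk2 P Q R K :: real
  assumes h1: "kk1 - k0 = 0 \<Longrightarrow> kk1 - k1 = 0" and h2: "kk2 - k1 = 0 \<Longrightarrow> kk1 - k1 = 0"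
  shows "(x-k0)/(kk1-k0) * (K*(P - Q/(kk1-k1))) + (kk2-x)/(kk2-k1) * (K*(Q/(kk1-k1) - R))
        = K * (((x-k0)*P + (kk1-x)/(kk1-k1)*Q)/(kk1-k0) - ((x-k1)/(kk1-k1)*Q + (kk2-x)*R)/(kk2-k1))"
proof -
  define u where "u = inverse (kk1-k0)"
  define vq where "vq = inverse (kk2-k1)"
  define c where "c = inverse (kk1-k1)"
  have "(x-k0)*u*(K*(P - Q*c)) + (kk2-x) * vq*(K*(Q*c - R))
        = K * (((x-k0)*P + (kk1-x)*c*Q)*u - ((x-k1)*c*Q + (kk2-x)*R) * vq)"
  proof (cases "c = 0")
    case True thus ?thesis by algebra
  next
    case False
    hence "kk1 - k1 \<noteq> 0" by (auto simp: c_def)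
    hence "kk1 - k0 \<noteq> 0" "kk2 - k1 \<noteq> 0" using h1 h2 by auto
    hence "(kk1-k0)*u = 1" "(kk2-k1) * vq = 1" by (auto simp: u_def vq_def)
    thus ?thesis by algebra
  qed
  thus ?thesis by (simp add: u_def vq_def c_def divide_inverse mult.assoc mult.commute mult.left_commute)
qed

lemma ind_deriv0:
  fixes a b x :: real
  assumes "x \<noteq> a" "x \<noteq> b"
  shows "((\<lambda>y. if a \<le> y \<and> y < b then 1 else 0 :: real) has_real_derivative 0) (at x)"
proof -
  have c0: "((\<lambda>y. 0::real) has_real_derivative 0) (at x)" by simp
  have c1: "((\<lambda>y. 1::real) has_real_derivative 0) (at x)" by simp
  show ?thesis
  proof (cases "x < a")
    case True
    show ?thesis
      by (rule has_field_derivative_transform_within_open[OF c0, of "{..<a}"]) (use True in auto)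
  next
    case False
    hence xa: "a < x" using assms by auto
    show ?thesis
    proof (cases "x < b")
      case True
      show ?thesis
        by (rule has_field_derivative_transform_within_open[OF c1, of "{a<..<b}"]) (use True xa in auto)
    next
      case False
      hence "b < x" using assms by auto
      thus ?thesis
        by (intro has_field_derivative_transform_within_open[OF c0, of "{b<..}"]) auto
    qed
  qed
qed

lemma bs_deriv:
  assumes n: "n \<ge> 1" and x: "x \<notin> range (knot p n)"
  shows "(bspline p n k i has_real_derivative bsd p n k i x) (at x)"
proof (induction k arbitrary: i)
  case 0
  have e: "bspline p n 0 i = (\<lambda>y. if knot p n i \<le> y \<and> y < knot p n (Suc i) then 1 else 0)"
    by (rule ext) simp
  have z: "bsd p n 0 i x = 0" by (simp add: bsd_def)
  show ?case unfolding z e by (rule ind_deriv0) (use x in auto)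
next
  case (Suc k)
  define A where "A = knot p n (i + Suc k) - knot p n i"
  define B where "B = knot p n (i + Suc k + 1) - knot p n (i + 1)"
  have e: "bspline p n (Suc k) i = (\<lambda>y. (y - knot p n i) / A * bspline p n k i y
          + (knot p n (i + Suc k + 1) - y) / B * bspline p n k (Suc i) y)"
    by (rule ext) (simp only: bspline.simps A_def B_def)
  have d1': "((\<lambda>y. y - knot p n i) has_real_derivative 1) (at x)"
    by (auto intro!: derivative_eq_intros)
  have d1: "((\<lambda>y. (y - knot p n i) / A) has_real_derivative 1 / A) (at x)"
    using DERIV_cdivide[OF d1', of A] by simp
  have d2': "((\<lambda>y. knot p n (i + Suc k + 1) - y) has_real_derivative -1) (at x)"
    by (auto intro!: derivative_eq_intros)
  have d2: "((\<lambda>y. (knot p n (i + Suc k + 1) - y) / B) has_real_derivative -1 / B) (at x)"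
    using DERIV_cdivide[OF d2', of B] by simp
  have d: "(bspline p n (Suc k) i has_real_derivative
      ((x - knot p n i) / A * bsd p n k i x + 1 / A * bspline p n k i x)
      + ((knot p n (i + Suc k + 1) - x) / B * bsd p n k (Suc i) x + -1 / B * bspline p n k (Suc i) x)) (at x)"
    unfolding e by (intro DERIV_add DERIV_mult' d1 d2 Suc.IH)
  have comb: "(x - knot p n i) / A * bsd p n k i x + (knot p n (i + Suc k + 1) - x) / B * bsd p n k (Suc i) x
      = real k * (bspline p n k i x / A - bspline p n k (Suc i) x / B)"
  proof (cases k)
    case 0 thus ?thesis by (simp add: bsd_def)
  next
    case (Suc k')
    define k0 where "k0 = knot p n i"
    define k1 where "k1 = knot p n (Suc i)"
    define kk1 where "kk1 = knot p n (i + Suc k)"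
    define kk2 where "kk2 = knot p n (i + Suc k + 1)"
    define P where "P = bspline p n k' i x / (knot p n (i + k) - k0)"
    define Q where "Q = bspline p n k' (Suc i) x"
    define R where "R = bspline p n k' (Suc (Suc i)) x / (kk2 - knot p n (Suc (Suc i)))"
    have A': "A = kk1 - k0" by (simp add: A_def kk1_def k0_def)
    have B': "B = kk2 - k1" by (simp add: B_def kk2_def k1_def)
    have m1: "k0 \<le> k1" "k1 \<le> kk1" "kk1 \<le> kk2"
      unfolding k0_def k1_def kk1_def kk2_def by (auto intro: knot_mono[OF n])
    have b1: "bsd p n k i x = real k * (P - Q / (kk1 - k1))"
      by (simp add: bsd_def Suc P_def Q_def kk1_def k1_def k0_def)
    have b2: "bsd p n k (Suc i) x = real k * (Q / (kk1 - k1) - R)"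
      by (simp add: bsd_def Suc Q_def R_def kk1_def k1_def kk2_def)
    have s1: "bspline p n k i x = (x - k0) * P + (kk1 - x) / (kk1 - k1) * Q"
      by (simp add: Suc P_def Q_def kk1_def k1_def k0_def)
    have s2: "bspline p n k (Suc i) x = (x - k1) / (kk1 - k1) * Q + (kk2 - x) * R"
      by (simp add: Suc Q_def R_def kk1_def k1_def kk2_def)
    show ?thesis unfolding b1 b2 s1 s2 A' B'
      by (fold k0_def kk2_def, rule alg_id) (use m1 in auto)
  qed
  have "bsd p n (Suc k) i x = real (Suc k) * (bspline p n k i x / A - bspline p n k (Suc i) x / B)"
    by (simp add: bsd_def A_def B_def)
  hence fin: "((x - knot p n i) / A * bsd p n k i x + 1 / A * bspline p n k i x)
      + ((knot p n (i + Suc k + 1) - x) / B * bsd p n k (Suc i) x + -1 / B * bspline p n k (Suc i) x)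
      = bsd p n (Suc k) i x"
  proof -
    have h: "1 / A * bspline p n k i x = bspline p n k i x / A" "-1 / B * bspline p n k (Suc i) x = - (bspline p n k (Suc i) x / B)"
      by simp_all
    have q0: "real (Suc k) * Z = real k * Z + Z" for Z :: real by (simp add: algebra_simps)
    note q = q0[of "bspline p n k i x / A - bspline p n k (Suc i) x / B"]
    show ?thesis unfolding h using comb q \<open>bsd p n (Suc k) i x = _\<close> by linarith
  qed
  show ?case using d unfolding fin .
qed

lemma isCont_split:
  fixes f g :: "real \<Rightarrow> real"
  assumes f: "isCont f x" and g: "isCont g x" and e: "x = c \<Longrightarrow> f c = g c"
  shows "isCont (\<lambda>y. if y < c then f y else g y) x"
proof (cases "x < c")
  case True
  have "eventually (\<lambda>y. y \<in> {..<c}) (nhds x)" using True by (intro eventually_nhds_in_open) auto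
  hence "eventually (\<lambda>y. f y = (if y < c then f y else g y)) (nhds x)" by eventually_elim auto
  from isCont_cong[OF this] f show ?thesis by simp
next
  case False
  show ?thesis
  proof (cases "x = c")
    case False2: False
    with False have xc: "c < x" by auto
    have "eventually (\<lambda>y. y \<in> {c<..}) (nhds x)" using xc by (intro eventually_nhds_in_open) auto
    hence "eventually (\<lambda>y. g y = (if y < c then f y else g y)) (nhds x)" by eventually_elim auto
    from isCont_cong[OF this] g show ?thesis by simp
  next
    case True
    have fg: "f c = g c" using e True by simp
    have eq: "(\<lambda>y. if y < c then f y else g y) = (\<lambda>y. if y \<le> c then f y else g y)"
      using fg by (auto simp: fun_eq_iff)
    have "isCont (\<lambda>y. if y \<le> c then f y else g y) c"
    proof (rule isCont_If_ge)
      show "continuous (at_left c) f" using f True continuous_at_split by blast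
      have "continuous (at_right c) g" using g True continuous_at_split by blast
      thus "(g \<longlongrightarrow> f c) (at_right c)" using fg by (simp add: continuous_within)
    qed
    thus ?thesis using eq True by simp
  qed
qed

lemma bs_rcont:
  assumes n: "n \<ge> 1"
  shows "continuous (at x within {x..}) (bspline p n k i)"
proof (induction k arbitrary: i)
  case 0
  have ev: "eventually (\<lambda>y. bspline p n 0 i y = bspline p n 0 i x) (at x within {x..})"
    unfolding eventually_at
  proof (cases "x < knot p n i")
    case True
    show "\<exists>d>0. \<forall>y\<in>{x..}. y \<noteq> x \<and> dist y x < d \<longrightarrow> bspline p n 0 i y = bspline p n 0 i x"
      by (rule exI[of _ "knot p n i - x"]) (use True in \<open>auto simp: dist_real_def\<close>)
  next
    case False
    show "\<exists>d>0. \<forall>y\<in>{x..}. y \<noteq> x \<and> dist y x < d \<longrightarrow> bspline p n 0 i y = bspline p n 0 i x"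
    proof (cases "x < knot p n (Suc i)")
      case True
      show ?thesis
        by (rule exI[of _ "knot p n (Suc i) - x"]) (use True False in \<open>auto simp: dist_real_def\<close>)
    next
      case False2: False
      show ?thesis
        by (rule exI[of _ 1]) (use False2 in \<open>auto simp: dist_real_def\<close>)
    qed
  qed
  show ?case unfolding continuous_within by (rule tendsto_eventually[OF ev])
next
  case (Suc k)
  have e: "bspline p n (Suc k) i = (\<lambda>y. (y - knot p n i) * inverse (knot p n (i + Suc k) - knot p n i) * bspline p n k i y
          + (knot p n (i + Suc k + 1) - y) * inverse (knot p n (i + Suc k + 1) - knot p n (i + 1)) * bspline p n k (Suc i) y)"
    by (rule ext) (simp only: bspline.simps divide_inverse)
  show ?case unfolding e by (intro continuous_intros Suc.IH)
qed

lemma bs_cont1: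
  assumes n: "n \<ge> 1" and x: "0 < x" "x < 1"
  shows "isCont (bspline p n 1 i) x"
proof -
  define a where "a = knot p n i"
  define b where "b = knot p n (Suc i)"
  define c where "c = knot p n (Suc (Suc i))"
  have e: "bspline p n 1 i = (\<lambda>y. if y < b then (if y < a then 0 else (y - a) * inverse (b - a))
                                 else (if y < c then (c - y) * inverse (c - b) else 0))"
    by (rule ext) (auto simp: a_def b_def c_def divide_inverse)
  have i1: "isCont (\<lambda>y. if y < a then 0 else (y - a) * inverse (b - a)) x"
    by (rule isCont_split) (auto intro!: continuous_intros)
  have i2: "isCont (\<lambda>y. if y < c then (c - y) * inverse (c - b) else 0) x"
    by (rule isCont_split) (auto intro!: continuous_intros)
  show ?thesis unfolding e
  proof (rule isCont_split[OF i1 i2])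
    assume xb: "x = b"
    have ks: "knot p n (Suc i - 1) < knot p n (Suc i) \<and> knot p n (Suc i) < knot p n (Suc i + 1)"
      by (rule knot_simple[OF n]) (use xb x in \<open>auto simp: b_def\<close>)
    hence "a < b" "b < c" by (auto simp: a_def b_def c_def)
    thus "(if b < a then 0 else (b - a) * inverse (b - a)) = (if b < c then (c - b) * inverse (c - b) else 0)" by auto
  qed
qed

lemma bs_cont:
  assumes n: "n \<ge> 1" and x: "0 < x" "x < 1" and k: "1 \<le> k"
  shows "isCont (bspline p n k i) x"
  using k
proof (induction k arbitrary: i rule: dec_induct)
  case base thus ?case by (rule bs_cont1[OF n x])
next
  case (step k)
  have e: "bspline p n (Suc k) i = (\<lambda>y. (y - knot p n i) * inverse (knot p n (i + Suc k) - knot p n i) * bspline p n k i y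
          + (knot p n (i + Suc k + 1) - y) * inverse (knot p n (i + Suc k + 1) - knot p n (i + 1)) * bspline p n k (Suc i) y)"
    by (rule ext) (simp only: bspline.simps divide_inverse)
  show ?case unfolding e by (intro continuous_intros step.IH)
qed

lemma bsd_fun: "bsd p n k i = (\<lambda>y. real k * (bspline p n (k-1) i y * inverse (knot p n (i+k) - knot p n i)
     - bspline p n (k-1) (i+1) y * inverse (knot p n (i+k+1) - knot p n (i+1))))"
  by (rule ext) (simp add: bsd_def divide_inverse)

lemma bsd2_fun: "bsd2 p n k i = (\<lambda>y. real k * (bsd p n (k-1) i y * inverse (knot p n (i+k) - knot p n i)
     - bsd p n (k-1) (i+1) y * inverse (knot p n (i+k+1) - knot p n (i+1))))"
  by (rule ext) (simp add: bsd2_def divide_inverse)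

lemma bsd_rcont: "n \<ge> 1 \<Longrightarrow> continuous (at x within {x..}) (bsd p n k i)"
  unfolding bsd_fun by (intro continuous_intros bs_rcont)

lemma bsd_cont: "n \<ge> 1 \<Longrightarrow> 0 < x \<Longrightarrow> x < 1 \<Longrightarrow> 2 \<le> k \<Longrightarrow> isCont (bsd p n k i) x"
  unfolding bsd_fun by (intro continuous_intros bs_cont) auto

lemma bsd_deriv:
  assumes n: "n \<ge> 1" and x: "x \<notin> range (knot p n)"
  shows "(bsd p n k i has_real_derivative bsd2 p n k i x) (at x)"
proof -
  have "((\<lambda>y. real k * (bspline p n (k-1) i y / (knot p n (i+k) - knot p n i)
     - bspline p n (k-1) (i+1) y / (knot p n (i+k+1) - knot p n (i+1)))) has_real_derivative
     real k * (bsd p n (k-1) i x / (knot p n (i+k) - knot p n i) - bsd p n (k-1) (i+1) x / (knot p n (i+k+1) - knot p n (i+1)))) (at x)"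
    by (intro DERIV_cmult DERIV_diff DERIV_cdivide bs_deriv[OF n x])
  thus ?thesis by (simp add: bsd_def[abs_def] bsd2_def)
qed

lemma bsd_bound:
  assumes n: "n \<ge> 1"
  shows "\<bar>bsd p n k i x\<bar> \<le> real k * 2^k * real n"
proof (cases k)
  case 0 thus ?thesis by (simp add: bsd_def)
next
  case (Suc k')
  have a: "\<bar>bspline p n k' i x / (knot p n (i+k) - knot p n i)\<bar> \<le> (2::real)^k' * real n"
  proof -
    have "\<bar>bspline p n k' i x / (knot p n (i+k) - knot p n i)\<bar> \<le> \<bar>bspline p n k' i x\<bar> * n" by (rule div_gap_bound[OF n]) simp
    also have "\<dots> \<le> (2::real)^k' * real n" by (rule mult_right_mono[OF bs_bound[OF n]]) simp
    finally show ?thesis .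
  qed
  have b: "\<bar>bspline p n k' (i+1) x / (knot p n (i+k+1) - knot p n (i+1))\<bar> \<le> (2::real)^k' * real n"
  proof -
    have "\<bar>bspline p n k' (i+1) x / (knot p n (i+k+1) - knot p n (i+1))\<bar> \<le> \<bar>bspline p n k' (i+1) x\<bar> * n" by (rule div_gap_bound[OF n]) simp
    also have "\<dots> \<le> (2::real)^k' * real n" by (rule mult_right_mono[OF bs_bound[OF n]]) simp
    finally show ?thesis .
  qed
  have "\<bar>bsd p n k i x\<bar> = real k * \<bar>bspline p n k' i x / (knot p n (i+k) - knot p n i)
      - bspline p n k' (i+1) x / (knot p n (i+k+1) - knot p n (i+1))\<bar>"
    by (simp add: bsd_def Suc abs_mult)
  also have "\<dots> \<le> real k * ((2::real)^k' * real n + (2::real)^k' * real n)"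
  proof (rule mult_left_mono)
    show "\<bar>bspline p n k' i x / (knot p n (i+k) - knot p n i)
      - bspline p n k' (i+1) x / (knot p n (i+k+1) - knot p n (i+1))\<bar> \<le> (2::real)^k' * real n + (2::real)^k' * real n"
      using a b abs_triangle_ineq4[of "bspline p n k' i x / (knot p n (i+k) - knot p n i)"
        "bspline p n k' (i+1) x / (knot p n (i+k+1) - knot p n (i+1))"] by linarith
  qed simp
  also have "\<dots> = real k * 2^k * real n" by (simp add: Suc)
  finally show ?thesis .
qed

lemma bsd2_bound:
  assumes n: "n \<ge> 1"
  shows "\<bar>bsd2 p n k i x\<bar> \<le> real k * real k * 2^k * real n^2"
proof (cases k)
  case 0 thus ?thesis by (simp add: bsd2_def)
next
  case (Suc k')
  have a: "\<bar>bsd p n k' i x / (knot p n (i+k) - knot p n i)\<bar> \<le> real k' * (2::real)^k' * real n * n"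
  proof -
    have "\<bar>bsd p n k' i x / (knot p n (i+k) - knot p n i)\<bar> \<le> \<bar>bsd p n k' i x\<bar> * n" by (rule div_gap_bound[OF n]) simp
    also have "\<dots> \<le> real k' * (2::real)^k' * real n * n" by (rule mult_right_mono[OF bsd_bound[OF n]]) simp
    finally show ?thesis .
  qed
  have b: "\<bar>bsd p n k' (i+1) x / (knot p n (i+k+1) - knot p n (i+1))\<bar> \<le> real k' * (2::real)^k' * real n * n"
  proof -
    have "\<bar>bsd p n k' (i+1) x / (knot p n (i+k+1) - knot p n (i+1))\<bar> \<le> \<bar>bsd p n k' (i+1) x\<bar> * n" by (rule div_gap_bound[OF n]) simp
    also have "\<dots> \<le> real k' * (2::real)^k' * real n * n" by (rule mult_right_mono[OF bsd_bound[OF n]]) simp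
    finally show ?thesis .
  qed
  have "\<bar>bsd2 p n k i x\<bar> = real k * \<bar>bsd p n k' i x / (knot p n (i+k) - knot p n i)
      - bsd p n k' (i+1) x / (knot p n (i+k+1) - knot p n (i+1))\<bar>"
    by (simp add: bsd2_def Suc abs_mult)
  also have "\<dots> \<le> real k * (real k' * (2::real)^k' * real n * n + real k' * (2::real)^k' * real n * n)"
  proof (rule mult_left_mono)
    show "\<bar>bsd p n k' i x / (knot p n (i+k) - knot p n i)
      - bsd p n k' (i+1) x / (knot p n (i+k+1) - knot p n (i+1))\<bar> \<le> real k' * (2::real)^k' * real n * n + real k' * (2::real)^k' * real n * n"
      using a b abs_triangle_ineq4[of "bsd p n k' i x / (knot p n (i+k) - knot p n i)"
        "bsd p n k' (i+1) x / (knot p n (i+k+1) - knot p n (i+1))"] by linarith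
  qed simp
  also have "\<dots> \<le> real k * real k * 2^k * real n^2"
  proof -
    have "real k' * (2::real)^k' * real n * n + real k' * (2::real)^k' * real n * n = real k' * 2^k * real n^2" by (simp add: Suc power2_eq_square)
    also have "\<dots> \<le> real k * 2^k * real n^2" using Suc by (intro mult_right_mono) auto
    finally show ?thesis by (simp add: mult.assoc mult_left_mono)
  qed
  finally show ?thesis .
qed

lemma bsd_supp:
  assumes n: "n \<ge> 1" and ne: "bsd p n k i x \<noteq> 0"
  shows "knot p n i \<le> x \<and> x < knot p n (i+k+1)"
proof (cases k)
  case 0 thus ?thesis using ne by (simp add: bsd_def)
next
  case (Suc k')
  from ne have "bspline p n k' i x \<noteq> 0 \<or> bspline p n k' (i+1) x \<noteq> 0" by (auto simp: bsd_def Suc)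
  thus ?thesis
  proof
    assume "bspline p n k' i x \<noteq> 0"
    from bs_supp[OF n this] show ?thesis using knot_mono[OF n, of "i + k' + 1" "i+k+1" p] Suc by auto
  next
    assume "bspline p n k' (i+1) x \<noteq> 0"
    from bs_supp[OF n this] show ?thesis using knot_mono[OF n, of i "i+1" p] Suc by auto
  qed
qed

lemma bsd2_supp:
  assumes n: "n \<ge> 1" and ne: "bsd2 p n k i x \<noteq> 0"
  shows "knot p n i \<le> x \<and> x < knot p n (i+k+1)"
proof (cases k)
  case 0 thus ?thesis using ne by (simp add: bsd2_def)
next
  case (Suc k')
  from ne have "bsd p n k' i x \<noteq> 0 \<or> bsd p n k' (i+1) x \<noteq> 0" by (auto simp: bsd2_def Suc)
  thus ?thesis
  proof
    assume "bsd p n k' i x \<noteq> 0"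
    from bsd_supp[OF n this] show ?thesis using knot_mono[OF n, of "i + k' + 1" "i+k+1" p] Suc by auto
  next
    assume "bsd p n k' (i+1) x \<noteq> 0"
    from bsd_supp[OF n this] show ?thesis using knot_mono[OF n, of i "i+1" p] Suc by auto
  qed
qed

lemma lip_from_deriv:
  fixes w w' :: "real \<Rightarrow> real"
  assumes cont: "continuous_on {0..T} w" and S: "finite S"
  and der: "\<And>y. y \<in> {0<..<T} - S \<Longrightarrow> (w has_real_derivative w' y) (at y)"
  and bnd: "\<And>y. y \<in> {0..T} \<Longrightarrow> \<bar>w' y\<bar> \<le> L"
  and y: "0 \<le> a" "a \<le> b" "b \<le> T"
  shows "\<bar>w b - w a\<bar> \<le> L * (b - a)"
proof -
  have L0: "0 \<le> L" using bnd[of a] y by auto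
  have "(w' has_integral (w b - w a)) {a..b}"
  proof (rule fundamental_theorem_of_calculus_interior_strong[OF S y(2)])
    show "(w has_vector_derivative w' x) (at x)" if "x \<in> {a<..<b} - S" for x
      using der[of x] that y by (auto simp: has_real_derivative_iff_has_vector_derivative)
    show "continuous_on {a..b} w" using cont by (rule continuous_on_subset) (use y in auto)
  qed
  hence hi: "(w' has_integral (w b - w a)) (cbox a b)" by simp
  have "norm (w b - w a) \<le> L * Henstock_Kurzweil_Integration.content (cbox a b)"
    by (rule has_integral_bound[OF L0 hi]) (use bnd y in auto)
  thus ?thesis using y by simp
qed

lemma integrable_powr_cont:
  fixes g :: "real \<Rightarrow> real"
  assumes g: "continuous_on {0..c} g" and b: "-1 < \<beta>"
  shows "(\<lambda>s. s powr \<beta> * g s) integrable_on {0..c}"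
proof (cases "0 \<le> c")
  case True
  have "(\<lambda>s. g s * s powr \<beta>) absolutely_integrable_on {0..c}"
  proof (rule absolutely_integrable_bounded_measurable_product_real)
    show "g \<in> borel_measurable (lebesgue_on {0..c})"
      using g by (intro continuous_imp_measurable_on_sets_lebesgue) auto
    show "{0..c} \<in> sets lebesgue" by simp
    show "bounded (g ` {0..c})" using g by (intro compact_imp_bounded compact_continuous_image) auto
    show "(\<lambda>s. s powr \<beta>) absolutely_integrable_on {0..c}"
      using integrable_on_powr_from_0[OF b True] by (intro nonnegative_absolutely_integrable_1) auto
  qed
  thus ?thesis by (simp add: mult.commute absolutely_integrable_on_def)
qed (simp add: integrable_on_empty)

lemma has_integral_reflect_interval:
  fixes f :: "real \<Rightarrow> real"
  assumes "(f has_integral I) {a..b}"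
  shows "((\<lambda>y. f (a + b - y)) has_integral I) {a..b}"
proof -
  have "((\<lambda>x. f (-x)) has_integral I) {-b..-a}" using assms by simp
  from has_integral_affinity'[OF this[unfolded box_real(2)[symmetric]], of 1 "-(a+b)"]
  show ?thesis by (simp add: algebra_simps)
qed

lemma integral_spike_fin:
  assumes "finite E" "\<And>x. x \<in> A - E \<Longrightarrow> f x = g x"
  shows "integral A f = integral A g"
  by (rule integral_spike[OF negligible_finite[OF assms(1)]]) (use assms(2) in auto)

lemma Lmain:
  fixes w w' :: "real \<Rightarrow> real" and \<beta> T t L :: real and S :: "real set"
  assumes \<beta>: "-1 < \<beta>" "\<beta> < 0" and t: "0 < t" "t < T"
  and cont: "continuous_on {0..T} w"
  and der: "\<And>y. y \<in> {0<..<T} - S \<Longrightarrow> (w has_real_derivative w' y) (at y)"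
  and S: "finite S"
  and bnd: "\<And>y. y \<in> {0..T} \<Longrightarrow> \<bar>w' y\<bar> \<le> L"
  shows "((\<lambda>\<tau>. integral {0..\<tau>} (\<lambda>y. (\<tau> - y) powr \<beta> * w y)) has_real_derivative
           (t powr \<beta> * w 0 + integral {0..t} (\<lambda>y. (t-y) powr \<beta> * w' y))) (at t)"
    and "(\<lambda>y. (t-y) powr \<beta> * w' y) integrable_on {0..t}"
proof -
  have T0: "0 < T" using t by simp
  have L0: "0 \<le> L" using bnd[of 0] T0 by auto
  define cl where "cl y = max 0 (min y T)" for y :: real
  define wt where "wt y = w (cl y) - w 0" for y
  have cl_in: "cl y \<in> {0..T}" for y using T0 by (auto simp: cl_def)
  have cl_lip: "\<bar>cl a - cl b\<bar> \<le> \<bar>a - b\<bar>" for a b by (auto simp: cl_def)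
  have wt_lip: "\<bar>wt a - wt b\<bar> \<le> L * \<bar>a - b\<bar>" for a b
  proof -
    have "\<bar>w (cl a) - w (cl b)\<bar> \<le> L * \<bar>cl a - cl b\<bar>"
    proof (cases "cl a \<le> cl b")
      case True
      have "\<bar>w (cl b) - w (cl a)\<bar> \<le> L * (cl b - cl a)"
        by (rule lip_from_deriv[OF cont S der bnd]) (use cl_in[of a] cl_in[of b] True in auto)
      thus ?thesis using True by (simp add: abs_minus_commute)
    next
      case False
      have "\<bar>w (cl a) - w (cl b)\<bar> \<le> L * (cl a - cl b)"
        by (rule lip_from_deriv[OF cont S der bnd]) (use cl_in[of a] cl_in[of b] False in auto)
      thus ?thesis using False by simp
    qed
    also have "\<dots> \<le> L * \<bar>a - b\<bar>" using cl_lip L0 by (simp add: mult_left_mono)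
    finally show ?thesis by (simp add: wt_def)
  qed
  have cl_cont: "continuous_on UNIV cl" unfolding cl_def by (intro continuous_intros)
  have wt_cont: "continuous_on UNIV wt"
  proof -
    have "continuous_on UNIV (\<lambda>y. w (cl y))"
      by (rule continuous_on_compose2[OF cont cl_cont]) (use cl_in in auto)
    thus ?thesis unfolding wt_def by (intro continuous_intros)
  qed
  have wt_neg: "wt y = 0" if "y \<le> 0" for y using that T0 by (simp add: wt_def cl_def)
  have wt_in: "wt y = w y - w 0" if "0 \<le> y" "y \<le> T" for y using that by (simp add: wt_def cl_def)
  define Q where "Q \<tau> = integral {0..T} (\<lambda>s. s powr \<beta> * wt (\<tau> - s))" for \<tau>
  have Qint: "(\<lambda>s. s powr \<beta> * wt (\<tau> - s)) integrable_on {0..T}" for \<tau>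
    by (rule integrable_powr_cont[OF _ \<beta>(1)])
       (rule continuous_on_compose2[OF wt_cont], auto intro!: continuous_intros)
  have rep: "integral {0..\<tau>} (\<lambda>y. (\<tau> - y) powr \<beta> * w y) = w 0 * (\<tau> powr (\<beta>+1) / (\<beta>+1)) + Q \<tau>"
    if \<tau>: "0 < \<tau>" "\<tau> < T" for \<tau>
  proof -
    have c1: "continuous_on {0..\<tau>} (\<lambda>s. w (\<tau> - s))"
      by (rule continuous_on_compose2[OF cont]) (use \<tau> in \<open>auto intro!: continuous_intros\<close>)
    have i1: "(\<lambda>s. s powr \<beta> * w (\<tau> - s)) integrable_on {0..\<tau>}" by (rule integrable_powr_cont[OF c1 \<beta>(1)])
    have i0: "((\<lambda>s. s powr \<beta>) has_integral \<tau> powr (\<beta>+1)/(\<beta>+1)) {0..\<tau>}"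
      using has_integral_powr_from_0[OF \<beta>(1)] \<tau> by simp
    have split: "integral {0..\<tau>} (\<lambda>s. s powr \<beta> * wt (\<tau> - s)) + integral {\<tau>..T} (\<lambda>s. s powr \<beta> * wt (\<tau> - s)) = Q \<tau>"
      unfolding Q_def by (rule Henstock_Kurzweil_Integration.integral_combine[where f="\<lambda>s. s powr \<beta> * wt (\<tau> - s)"]) (use \<tau> Qint in auto)
    have z: "integral {\<tau>..T} (\<lambda>s. s powr \<beta> * wt (\<tau> - s)) = 0"
    proof -
      have "integral {\<tau>..T} (\<lambda>s. s powr \<beta> * wt (\<tau> - s)) = integral {\<tau>..T} (\<lambda>s. 0)"
        by (rule integral_cong) (simp add: wt_neg)
      thus ?thesis by simp
    qed
    have h1: "((\<lambda>s. s powr \<beta> * w (\<tau> - s)) has_integral integral {0..\<tau>} (\<lambda>s. s powr \<beta> * w (\<tau> - s))) {0..\<tau>}"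
      using i1 by (simp add: has_integral_integral)
    have h2: "((\<lambda>s. w 0 * s powr \<beta>) has_integral w 0 * (\<tau> powr (\<beta>+1)/(\<beta>+1))) {0..\<tau>}"
      by (rule has_integral_mult_right[OF i0])
    have h3: "((\<lambda>s. s powr \<beta> * w (\<tau> - s) - w 0 * s powr \<beta>) has_integral
        integral {0..\<tau>} (\<lambda>s. s powr \<beta> * w (\<tau> - s)) - w 0 * (\<tau> powr (\<beta>+1)/(\<beta>+1))) {0..\<tau>}"
      by (rule has_integral_diff[OF h1 h2])
    have e2: "integral {0..\<tau>} (\<lambda>s. s powr \<beta> * wt (\<tau> - s)) = integral {0..\<tau>} (\<lambda>s. s powr \<beta> * w (\<tau> - s) - w 0 * s powr \<beta>)"
      by (rule integral_cong) (use \<tau> in \<open>auto simp: wt_in algebra_simps\<close>)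
    also have "\<dots> = integral {0..\<tau>} (\<lambda>s. s powr \<beta> * w (\<tau> - s)) - w 0 * (\<tau> powr (\<beta>+1)/(\<beta>+1))"
      using h3 by (rule integral_unique)
    finally have e3: "integral {0..\<tau>} (\<lambda>s. s powr \<beta> * w (\<tau> - s)) = w 0 * (\<tau> powr (\<beta>+1)/(\<beta>+1)) + Q \<tau>"
      using split z by linarith
    have "((\<lambda>y. (0 + \<tau> - y) powr \<beta> * w (\<tau> - (0 + \<tau> - y))) has_integral integral {0..\<tau>} (\<lambda>s. s powr \<beta> * w (\<tau> - s))) {0..\<tau>}"
      using has_integral_reflect_interval[OF h1] by simp
    hence "((\<lambda>y. (\<tau> - y) powr \<beta> * w y) has_integral integral {0..\<tau>} (\<lambda>s. s powr \<beta> * w (\<tau> - s))) {0..\<tau>}"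
      by simp
    hence "integral {0..\<tau>} (\<lambda>y. (\<tau> - y) powr \<beta> * w y) = integral {0..\<tau>} (\<lambda>s. s powr \<beta> * w (\<tau> - s))"
      by (rule integral_unique)
    thus ?thesis using e3 by simp
  qed
  define wd where "wd x = (if x \<le> 0 then 0 else w' x)" for x
  define E where "E = insert t ((\<lambda>y. t - y) ` S)"
  have Efin: "finite E" using S by (simp add: E_def)
  define g where "g s = (if s \<in> E then 0 else s powr \<beta> * wd (t - s))" for s
  have key: "g integrable_on {0..T} \<and> (\<lambda>k. (Q (t + X k) - Q t) / X k) \<longlonglongrightarrow> integral {0..T} g"
    if X0: "\<And>k. X k \<noteq> 0" and Xlim: "X \<longlonglongrightarrow> 0" for X
  proof -
    define f where "f k s = (if s \<in> E then 0 else s powr \<beta> * ((wt (t + X k - s) - wt (t - s)) / X k))" for k s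
    have fint: "f k integrable_on {0..T}" for k
    proof -
      have "(\<lambda>s. s powr \<beta> * ((wt (t + X k - s) - wt (t - s)) / X k)) integrable_on {0..T}"
        by (rule integrable_powr_cont[OF _ \<beta>(1)])
          (intro continuous_intros continuous_on_compose2[OF wt_cont], auto simp: X0)
      thus ?thesis by (rule integrable_spike_finite[OF Efin, rotated]) (auto simp: f_def)
    qed
    have hint: "(\<lambda>s. L * s powr \<beta>) integrable_on {0..T}"
    proof -
      have "(\<lambda>x. x powr \<beta>) integrable_on {0..T}" using integrable_on_powr_from_0[OF \<beta>(1), of T] T0 by simp
      from integrable_on_cmult_left[OF this, of L] show ?thesis by simp
    qed
    have fle: "norm (f k s) \<le> L * s powr \<beta>" if "s \<in> {0..T}" for k s
    proof -
      have "\<bar>wt (t + X k - s) - wt (t - s)\<bar> \<le> L * \<bar>X k\<bar>" using wt_lip[of "t + X k - s" "t - s"] by simp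
      hence q: "\<bar>(wt (t + X k - s) - wt (t - s)) / X k\<bar> \<le> L" using X0[of k] by (simp add: abs_divide divide_le_eq)
      have "\<bar>s powr \<beta> * ((wt (t + X k - s) - wt (t - s)) / X k)\<bar> = s powr \<beta> * \<bar>(wt (t + X k - s) - wt (t - s)) / X k\<bar>"
        by (simp add: abs_mult)
      also have "\<dots> \<le> s powr \<beta> * L" using q by (intro mult_left_mono) auto
      finally show ?thesis using L0 by (auto simp: f_def mult.commute)
    qed
    have fconv: "(\<lambda>k. f k s) \<longlonglongrightarrow> g s" if s: "s \<in> {0..T}" for s
    proof (cases "s \<in> E")
      case True thus ?thesis by (simp add: f_def g_def)
    next
      case False
      hence st: "s \<noteq> t" by (auto simp: E_def)
      have sS: "t - s \<notin> S"
      proof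
        assume "t - s \<in> S"
        hence "t - (t - s) \<in> (\<lambda>y. t - y) ` S" by blast
        thus False using False by (simp add: E_def)
      qed
      show ?thesis
      proof (cases "t - s < 0")
        case True
        have ev: "eventually (\<lambda>k. f k s = 0) sequentially"
        proof -
          have "eventually (\<lambda>k. dist (X k) 0 < s - t) sequentially" using Xlim True by (intro tendstoD) auto
          thus ?thesis
          proof eventually_elim
            case (elim k)
            hence "t + X k - s \<le> 0" by (auto simp: dist_real_def)
            thus ?case using True False by (simp add: f_def wt_neg)
          qed
        qed
        have "g s = 0" using False True by (simp add: g_def wd_def)
        thus ?thesis using ev by (simp add: tendsto_eventually)
      next
        case False2: False
        hence pos: "0 < t - s" using st by auto
        have lt: "t - s < T" using t s by auto
        have dw: "(w has_real_derivative w' (t - s)) (at (t - s))" using der[of "t-s"] pos lt sS by auto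
        have dwt: "(wt has_real_derivative w' (t - s)) (at (t - s))"
        proof (rule has_field_derivative_transform_within_open[of "\<lambda>y. w y - w 0" _ _ "{0<..<T}"])
          show "((\<lambda>y. w y - w 0) has_real_derivative w' (t - s)) (at (t - s))"
            using dw by (auto intro!: derivative_eq_intros)
        qed (use pos lt wt_in in auto)
        hence lim: "((\<lambda>h. (wt (t - s + h) - wt (t - s)) / h) \<longlongrightarrow> w' (t - s)) (at 0)"
          by (simp add: DERIV_def)
        hence "((\<lambda>h. (wt (t - s + h) - wt (t - s)) / h) \<circ> X) \<longlonglongrightarrow> w' (t - s)"
          using X0 Xlim unfolding tendsto_at_iff_sequentially by auto
        hence "(\<lambda>k. s powr \<beta> * ((wt (t + X k - s) - wt (t - s)) / X k)) \<longlonglongrightarrow> s powr \<beta> * w' (t - s)"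
          by (intro tendsto_mult_left) (simp add: comp_def algebra_simps)
        moreover have "g s = s powr \<beta> * w' (t - s)" using False pos by (simp add: g_def wd_def)
        ultimately show ?thesis using False by (simp add: f_def)
      qed
    qed
    have dc: "g integrable_on {0..T}" "(\<lambda>k. integral {0..T} (f k)) \<longlonglongrightarrow> integral {0..T} g"
      using dominated_convergence[of f "{0..T}" "\<lambda>s. L * s powr \<beta>" g, OF fint hint fle fconv] by auto
    have ie: "integral {0..T} (f k) = (Q (t + X k) - Q t) / X k" for k
    proof -
      have "integral {0..T} (f k) = integral {0..T} (\<lambda>s. (s powr \<beta> * wt (t + X k - s) - s powr \<beta> * wt (t - s)) / X k)"
        by (rule integral_spike_fin[OF Efin]) (simp add: f_def right_diff_distrib)
      also have "\<dots> = (Q (t + X k) - Q t) / X k"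
      proof (rule integral_unique)
        have "((\<lambda>s. s powr \<beta> * wt (t + X k - s) - s powr \<beta> * wt (t - s)) has_integral (Q (t + X k) - Q t)) {0..T}"
          unfolding Q_def by (intro has_integral_diff) (use Qint in \<open>simp_all add: has_integral_integral\<close>)
        thus "((\<lambda>s. (s powr \<beta> * wt (t + X k - s) - s powr \<beta> * wt (t - s)) / X k) has_integral (Q (t + X k) - Q t) / X k) {0..T}"
          by (rule has_integral_divide)
      qed
      finally show ?thesis .
    qed
    show ?thesis using dc ie by simp
  qed
  have Qd: "(Q has_real_derivative integral {0..T} g) (at t)"
    unfolding DERIV_def tendsto_at_iff_sequentially
  proof (intro allI impI)
    fix X :: "nat \<Rightarrow> real" assume "\<forall>i. X i \<in> UNIV - {0}" "X \<longlonglongrightarrow> 0"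
    thus "((\<lambda>h. (Q (t + h) - Q t) / h) \<circ> X) \<longlonglongrightarrow> integral {0..T} g"
      using key[of X] by (simp add: comp_def)
  qed
  have gint: "g integrable_on {0..T}"
    using key[of "\<lambda>k. inverse (real (Suc k))"] LIMSEQ_inverse_real_of_nat by simp
  have gint2: "g integrable_on {0..t}" by (rule integrable_subinterval_real[OF gint]) (use t in auto)
  have gsplit: "integral {0..T} g = integral {0..t} g"
  proof -
    have "integral {0..t} g + integral {t..T} g = integral {0..T} g"
      by (rule Henstock_Kurzweil_Integration.integral_combine[where f=g]) (use t gint in auto)
    moreover have "integral {t..T} g = 0"
    proof -
      have "integral {t..T} g = integral {t..T} (\<lambda>s. 0)"
        by (rule integral_cong) (simp add: g_def wd_def)
      thus ?thesis by simp
    qed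
    ultimately show ?thesis by simp
  qed
  define k where "k s = s powr \<beta> * w' (t - s)" for s
  have kint: "(k has_integral integral {0..t} g) {0..t}"
  proof -
    have "(g has_integral integral {0..t} g) {0..t}" using gint2 by (simp add: has_integral_integral)
    thus ?thesis
      by (rule has_integral_spike_finite_eq[OF Efin, THEN iffD1, rotated])
         (auto simp: g_def k_def wd_def E_def)
  qed
  have kref: "((\<lambda>y. (t - y) powr \<beta> * w' y) has_integral integral {0..t} g) {0..t}"
    using has_integral_reflect_interval[OF kint] by (simp add: k_def)
  show "(\<lambda>y. (t-y) powr \<beta> * w' y) integrable_on {0..t}" using kref by (auto simp: integrable_on_def)
  have ieq: "integral {0..t} (\<lambda>y. (t-y) powr \<beta> * w' y) = integral {0..T} g"
    using kref gsplit by (simp add: integral_unique)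
  have pd: "((\<lambda>\<tau>. \<tau> powr (\<beta>+1)) has_real_derivative (\<beta>+1) * t powr \<beta>) (at t)"
    using has_real_derivative_powr[OF t(1), of "\<beta>+1"] by simp
  have Hd: "((\<lambda>\<tau>. w 0 * (\<tau> powr (\<beta>+1) / (\<beta>+1)) + Q \<tau>) has_real_derivative
      (w 0 * ((\<beta>+1) * t powr \<beta> / (\<beta>+1)) + integral {0..T} g)) (at t)"
    by (intro DERIV_add DERIV_cmult DERIV_cdivide pd Qd)
  have "((\<lambda>\<tau>. integral {0..\<tau>} (\<lambda>y. (\<tau> - y) powr \<beta> * w y)) has_real_derivative
      (w 0 * ((\<beta>+1) * t powr \<beta> / (\<beta>+1)) + integral {0..T} g)) (at t)"
    by (rule has_field_derivative_transform_within_open[OF Hd, of "{0<..<T}"]) (use t rep in auto)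
  thus "((\<lambda>\<tau>. integral {0..\<tau>} (\<lambda>y. (\<tau> - y) powr \<beta> * w y)) has_real_derivative
           (t powr \<beta> * w 0 + integral {0..t} (\<lambda>y. (t-y) powr \<beta> * w' y))) (at t)"
    using \<beta> ieq by (simp add: mult.commute)
qed

lemma powr_deriv_shift:
  assumes "y < x"
  shows "((\<lambda>x. (x - y) powr r * c) has_real_derivative (r * (x - y) powr (r - 1) * c)) (at x)"
proof -
  have g: "((\<lambda>x. x - y) has_real_derivative 1) (at x)" by (auto intro!: derivative_eq_intros)
  from DERIV_fun_powr[OF g, of r] assms
  have "((\<lambda>x. (x - y) powr r) has_real_derivative r * (x - y) powr (r - 1)) (at x)" by simp
  from DERIV_cmult_right[OF this, of c] show ?thesis by simp
qed

lemma far_deriv2: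
  fixes u :: "real \<Rightarrow> real" and \<beta> b t :: real
  assumes b0: "0 \<le> b" and bt: "b < t" and ucont: "continuous_on {0..b} u"
    and uz: "\<And>y. b \<le> y \<Longrightarrow> u y = 0"
  shows "deriv (deriv (\<lambda>\<tau>. integral {0..\<tau>} (\<lambda>y. (\<tau> - y) powr \<beta> * u y))) t
         = \<beta> * (\<beta> - 1) * integral {0..b} (\<lambda>y. (t - y) powr (\<beta> - 2) * u y)"
proof -
  define F where "F \<tau> = integral {0..\<tau>} (\<lambda>y. (\<tau> - y) powr \<beta> * u y)" for \<tau>
  define G where "G \<tau> = integral {0..b} (\<lambda>y. (\<tau> - y) powr \<beta> * u y)" for \<tau>
  define G1 where "G1 \<tau> = integral {0..b} (\<lambda>y. \<beta> * (\<tau> - y) powr (\<beta> - 1) * u y)" for \<tau>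
  define G2 where "G2 \<tau> = integral {0..b} (\<lambda>y. \<beta> * (\<beta> - 1) * (\<tau> - y) powr (\<beta> - 1 - 1) * u y)" for \<tau>
  define U where "U = {b<..}"
  have U: "open U" "convex U" by (auto simp: U_def)
  have ucomp: "continuous_on (U \<times> {0..b}) (\<lambda>z. u (snd z))"
    by (rule continuous_on_compose2[OF ucont continuous_on_snd]) auto
  have kcont: "continuous_on (U \<times> {0..b}) (\<lambda>z. (fst z - snd z) powr r)" for r
    by (intro continuous_intros) (auto simp: U_def)
  have pint: "(\<lambda>y. c * (x - y) powr r * u y) integrable_on {0..b}" if "x \<in> U" for x r c
  proof -
    have "continuous_on {0..b} (\<lambda>y. c * (x - y) powr r * u y)"
      using that by (intro continuous_intros ucont) (auto simp: U_def)
    thus ?thesis by (rule integrable_continuous_interval)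
  qed
  have FG: "F \<tau> = G \<tau>" if "b < \<tau>" for \<tau>
  proof -
    have i: "((\<lambda>y. (\<tau> - y) powr \<beta> * u y) has_integral G \<tau>) {0..b}"
      using pint[of \<tau> 1 \<beta>] that by (simp add: G_def U_def has_integral_integral)
    have z: "((\<lambda>y. (\<tau> - y) powr \<beta> * u y) has_integral 0) {b..\<tau>}"
      by (rule has_integral_is_0) (simp add: uz)
    have "((\<lambda>y. (\<tau> - y) powr \<beta> * u y) has_integral (G \<tau> + 0)) {0..\<tau>}"
      by (rule has_integral_combine[OF b0 _ i z]) (use that in auto)
    thus ?thesis by (simp add: F_def integral_unique)
  qed
  have lb: "((\<lambda>x. integral (cbox 0 b) (\<lambda>y. c * (x - y) powr r * u y)) has_real_derivative
            integral (cbox 0 b) (\<lambda>y. c * (r * (x0 - y) powr (r - 1) * u y))) (at x0)"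
    if x0: "x0 \<in> U" for c r x0
  proof -
    have "((\<lambda>x. integral (cbox 0 b) (\<lambda>y. c * (x - y) powr r * u y)) has_field_derivative
            integral (cbox 0 b) (\<lambda>y. c * (r * (x0 - y) powr (r - 1) * u y))) (at x0 within U)"
    proof (rule leibniz_rule_field_derivative[where fx="\<lambda>x y. c * (r * (x - y) powr (r - 1) * u y)"])
      fix x y assume "x \<in> U" "y \<in> cbox 0 b"
      hence "y < x" by (auto simp: U_def)
      from DERIV_cmult[OF powr_deriv_shift[OF this, of r "u y"], of c]
      show "((\<lambda>x. c * (x - y) powr r * u y) has_field_derivative c * (r * (x - y) powr (r - 1) * u y)) (at x within U)"
        by (simp add: has_field_derivative_at_within mult.assoc)
    next
      fix x assume "x \<in> U" thus "(\<lambda>y. c * (x - y) powr r * u y) integrable_on cbox 0 b"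
        using pint by simp
    next
      show "continuous_on (U \<times> cbox 0 b) (\<lambda>(x, y). c * (r * (x - y) powr (r - 1) * u y))"
        using kcont[of "r - 1"] ucomp by (auto simp: case_prod_unfold intro!: continuous_intros)
    qed (use x0 U in auto)
    thus ?thesis using at_within_open[OF x0 U(1)] by simp
  qed
  have dF: "deriv F x = G1 x" if "x \<in> U" for x
  proof (rule DERIV_imp_deriv)
    have "(G has_real_derivative G1 x) (at x)"
      using lb[OF that, of 1 \<beta>] by (simp add: G_def[abs_def] G1_def mult.assoc)
    thus "(F has_real_derivative G1 x) (at x)"
      by (rule has_field_derivative_transform_within_open[OF _ U(1) that]) (auto simp: FG U_def)
  qed
  have tU: "t \<in> U" using bt by (simp add: U_def)
  have "deriv (deriv F) t = G2 t"
  proof (rule DERIV_imp_deriv)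
    have "(G1 has_real_derivative G2 t) (at t)"
      using lb[OF tU, of \<beta> "\<beta> - 1"] by (simp add: G1_def[abs_def] G2_def mult.assoc mult.left_commute)
    thus "(deriv F has_real_derivative G2 t) (at t)"
      by (rule has_field_derivative_transform_within_open[OF _ U(1) tU]) (auto simp: dF)
  qed
  also have "G2 t = \<beta> * (\<beta> - 1) * integral {0..b} (\<lambda>y. (t - y) powr (\<beta> - 2) * u y)"
  proof -
    have "(\<lambda>y. (t - y) powr (\<beta> - 2) * u y) integrable_on {0..b}" using pint[OF tU, of 1 "\<beta> - 2"] by simp
    hence "\<beta> * (\<beta> - 1) * integral {0..b} (\<lambda>y. (t - y) powr (\<beta> - 2) * u y)
       = integral {0..b} (\<lambda>y. \<beta> * (\<beta> - 1) * ((t - y) powr (\<beta> - 2) * u y))"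
      by (rule integral_mult)
    thus ?thesis by (simp add: G2_def mult.assoc)
  qed
  finally show ?thesis by (simp add: F_def[abs_def])
qed

lemma has_integral_powr_rev:
  fixes \<beta> a m :: real
  assumes "-1 < \<beta>" "a \<le> m"
  shows "((\<lambda>y. (m - y) powr \<beta>) has_integral (m - a) powr (\<beta>+1) / (\<beta>+1)) {a..m}"
proof -
  have "((\<lambda>s. s powr \<beta>) has_integral (m - a) powr (\<beta>+1)/(\<beta>+1)) {0..m-a}"
    using has_integral_powr_from_0[of \<beta> "m - a"] assms by simp
  from has_integral_reflect_interval[OF this]
  have "((\<lambda>y. (0 + (m - a) - y) powr \<beta>) has_integral (m - a) powr (\<beta>+1)/(\<beta>+1)) (cbox 0 (m-a))" by simp
  from has_integral_affinity'[OF this, of 1 "-a"]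
  show ?thesis by (simp add: algebra_simps)
qed

lemma near_int_bound:
  fixes f :: "real \<Rightarrow> real" and \<beta> a b t K :: real
  assumes \<beta>: "-1 < \<beta>" "\<beta> < 0" and a0: "0 \<le> a" and ab: "a \<le> b" and t0: "0 < t"
   and fint: "(\<lambda>y. (t - y) powr \<beta> * f y) integrable_on {0..t}"
   and fb: "\<And>y. \<bar>f y\<bar> \<le> K"
   and fs: "\<And>y. f y \<noteq> 0 \<Longrightarrow> a \<le> y \<and> y < b"
  shows "\<bar>integral {0..t} (\<lambda>y. (t - y) powr \<beta> * f y)\<bar> \<le> K * (b - a) powr (\<beta> + 1) / (\<beta> + 1)"
proof -
  have K0: "0 \<le> K" using fb[of 0] by simp
  have R0: "0 \<le> K * (b - a) powr (\<beta> + 1) / (\<beta> + 1)" using K0 \<beta> by simp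
  define m where "m = min b t"
  show ?thesis
  proof (cases "a \<le> m")
    case False
    have "integral {0..t} (\<lambda>y. (t - y) powr \<beta> * f y) = integral {0..t} (\<lambda>y. 0)"
    proof (rule integral_cong)
      fix y assume y: "y \<in> {0..t}"
      have "f y = 0"
      proof (rule ccontr)
        assume "f y \<noteq> 0"
        from fs[OF this] y False ab show False by (auto simp: m_def)
      qed
      thus "(t - y) powr \<beta> * f y = 0" by simp
    qed
    thus ?thesis using R0 by simp
  next
    case True
    define g where "g y = (if y \<in> cbox a m then K * (m - y) powr \<beta> else 0)" for y
    have gi: "(g has_integral K * ((m - a) powr (\<beta>+1) / (\<beta>+1))) (cbox 0 t)"
      unfolding g_def
    proof (rule has_integral_restrict_closed_subinterval)
      show "((\<lambda>y. K * (m - y) powr \<beta>) has_integral K * ((m - a) powr (\<beta>+1) / (\<beta>+1))) (cbox a m)"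
        using has_integral_mult_right[OF has_integral_powr_rev[OF \<beta>(1) True], of K] by simp
      show "cbox a m \<subseteq> cbox 0 t" using a0 by (auto simp: m_def)
    qed
    have le: "norm ((t - y) powr \<beta> * f y) \<le> g y" if y: "y \<in> {0..t}" for y
    proof (cases "f y = 0")
      case True thus ?thesis using K0 by (simp add: g_def)
    next
      case False
      from fs[OF False] have ay: "a \<le> y" "y < b" by auto
      show ?thesis
      proof (cases "y = t")
        case True thus ?thesis using K0 by (simp add: g_def)
      next
        case False
        hence yt: "y < t" using y by auto
        hence ym: "y < m" using ay by (auto simp: m_def)
        have "(t - y) powr \<beta> \<le> (m - y) powr \<beta>"
          by (rule powr_mono2') (use \<beta> ym in \<open>auto simp: m_def\<close>)
        hence "norm ((t - y) powr \<beta> * f y) \<le> (m - y) powr \<beta> * K"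
          using fb[of y] by (simp add: abs_mult) (rule mult_mono, auto)
        thus ?thesis using ay ym by (simp add: g_def mult.commute)
      qed
    qed
    have "\<bar>integral {0..t} (\<lambda>y. (t - y) powr \<beta> * f y)\<bar> \<le> integral {0..t} g"
      using integral_norm_bound_integral[OF fint _ le] gi by (auto simp: integrable_on_def)
    also have "integral {0..t} g = K * ((m - a) powr (\<beta>+1) / (\<beta>+1))" using gi by (simp add: integral_unique)
    also have "\<dots> \<le> K * ((b - a) powr (\<beta>+1) / (\<beta>+1))"
      using True \<beta> K0 by (intro mult_left_mono divide_right_mono powr_mono2) (auto simp: m_def)
    finally show ?thesis by simp
  qed
qed

lemma far_int_bound:
  fixes u :: "real \<Rightarrow> real"
  assumes a0: "0 \<le> a" "a \<le> b" "b < t" and r: "r \<le> 0" and ucont: "continuous_on {0..b} u"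
   and ub: "\<And>y. \<bar>u y\<bar> \<le> K" and us: "\<And>y. u y \<noteq> 0 \<Longrightarrow> a \<le> y"
  shows "\<bar>integral {0..b} (\<lambda>y. (t - y) powr r * u y)\<bar> \<le> (t - b) powr r * K * (b - a)"
proof -
  have K0: "0 \<le> K" using ub[of 0] by simp
  define g where "g y = (if y \<in> cbox a b then (t - b) powr r * K else 0)" for y
  have gi: "(g has_integral (b - a) * ((t - b) powr r * K)) (cbox 0 b)"
    unfolding g_def
  proof (rule has_integral_restrict_closed_subinterval)
    show "((\<lambda>y. (t - b) powr r * K) has_integral (b - a) * ((t - b) powr r * K)) (cbox a b)"
      using has_integral_const_real[of "(t - b) powr r * K" a b] a0 by simp
    show "cbox a b \<subseteq> cbox 0 b" using a0 by auto
  qed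
  have fint: "(\<lambda>y. (t - y) powr r * u y) integrable_on {0..b}"
    by (rule integrable_continuous_interval) (use a0 in \<open>auto intro!: continuous_intros ucont\<close>)
  have le: "norm ((t - y) powr r * u y) \<le> g y" if y: "y \<in> {0..b}" for y
  proof (cases "u y = 0")
    case True thus ?thesis using K0 by (simp add: g_def)
  next
    case False
    from us[OF False] have ay: "a \<le> y" .
    have "(t - y) powr r \<le> (t - b) powr r"
      by (rule powr_mono2') (use r y a0 in auto)
    hence "norm ((t - y) powr r * u y) \<le> (t - b) powr r * K"
      using ub[of y] by (simp add: abs_mult) (rule mult_mono, auto)
    thus ?thesis using ay y by (simp add: g_def)
  qed
  have "\<bar>integral {0..b} (\<lambda>y. (t - y) powr r * u y)\<bar> \<le> integral {0..b} g"
    using integral_norm_bound_integral[OF fint _ le] gi by (auto simp: integrable_on_def)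
  also have "integral {0..b} g = (b - a) * ((t - b) powr r * K)" using gi by (simp add: integral_unique)
  finally show ?thesis by (simp add: mult.commute mult.left_commute)
qed

lemma grev_bounds:
  assumes n: "n \<ge> 1" and p: "2 \<le> p" and i: "1 \<le> i" "i \<le> n + p - 2"
  shows "1 / (real p * n) \<le> greville p n (i+1)" "greville p n (i+1) < 1"
    "knot p n (i+2) \<le> greville p n (i+1)" "greville p n (i+1) \<le> knot p n (i+p+1)"
proof -
  define A where "A = {i+2..i+p+1}"
  have cA: "card A = p" by (simp add: A_def)
  have fA: "finite A" by (simp add: A_def)
  have g: "greville p n (i+1) = sum (knot p n) A / real p"
    by (simp add: greville_def A_def add.commute add.left_commute)
  have pp: "0 < real p" using p by simp
  have lo: "real p * knot p n (i+2) \<le> sum (knot p n) A"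
    using sum_bounded_below[of A "knot p n (i+2)" "knot p n", OF knot_mono[OF n]] cA
    by (auto simp: A_def)
  have hi: "sum (knot p n) A \<le> real p * knot p n (i+p+1)"
    using sum_bounded_above[of A "knot p n" "knot p n (i+p+1)", OF knot_mono[OF n]] cA
    by (auto simp: A_def)
  show "knot p n (i+2) \<le> greville p n (i+1)" unfolding g using lo pp by (simp add: le_divide_eq mult.commute)
  show "greville p n (i+1) \<le> knot p n (i+p+1)" unfolding g using hi pp by (simp add: divide_le_eq mult.commute)
  have k1: "knot p n (p+2) = 1 / real n" using n by (simp add: knot_eq)
  have "1 / real n \<le> sum (knot p n) A"
  proof -
    have "1 / real n \<le> knot p n (i+p+1)" using knot_mono[OF n, of "p+2" "i+p+1" p] i k1 by auto
    also have "\<dots> = sum (knot p n) {i+p+1}" by simp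
    also have "\<dots> \<le> sum (knot p n) A"
      by (rule sum_mono2[OF fA]) (use p in \<open>auto simp: A_def knot_nonneg[OF n]\<close>)
    finally show ?thesis .
  qed
  thus "1 / (real p * n) \<le> greville p n (i+1)" unfolding g using pp
    by (simp add: divide_right_mono[of "1 / real n" _ "real p", simplified] mult.commute)
  have s: "sum (knot p n) A < sum (\<lambda>k. 1) A"
  proof (rule sum_strict_mono_ex1[OF fA])
    show "\<forall>x\<in>A. knot p n x \<le> 1" using knot_le1[OF n] by auto
    have "knot p n (i+2) \<le> knot p n (n+p)" using i by (intro knot_mono[OF n]) auto
    also have "knot p n (n+p) < 1" using n by (simp add: knot_eq)
    finally show "\<exists>a\<in>A. knot p n a < 1" using p by (auto simp: A_def intro!: bexI[of _ "i+2"])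
  qed
  thus "greville p n (i+1) < 1" unfolding g using pp cA by (simp add: divide_less_eq)
qed

lemma knot_gap_far:
  assumes n: "n \<ge> 1" and ij: "j + p + 1 \<le> i" "i \<le> n + p - 2"
  shows "real (i - p - j) / n \<le> knot p n (i+2) - knot p n (j+1+p+1)"
proof -
  have m1: "i + 2 - (p+1) \<le> n" "i + 2 - (p+1) = i + 1 - p" using ij n by arith+
  have m2: "j + 1 + p + 1 - (p+1) \<le> n" "j + 1 + p + 1 - (p+1) = j + 1" using ij n by arith+
  have e1: "knot p n (i+2) = real (i + 1 - p) / n" using m1 by (simp add: knot_eq[OF n] min_absorb1)
  have e2: "knot p n (j+1+p+1) = real (j + 1) / n" using m2 by (simp add: knot_eq[OF n] min_absorb1)
  have d: "real (i - p - j) = real (i + 1 - p) - real (j + 1)" using ij by (simp add: of_nat_diff)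
  have dd: "(real (i + 1 - p) - real (j + 1)) / real n = real (i + 1 - p) / real n - real (j + 1) / real n"
    by (rule diff_divide_distrib)
  show ?thesis unfolding e1 e2 d dd by (rule order_refl)
qed

lemma knot_left:
  assumes n: "n \<ge> 1" and ij: "i + p + 1 \<le> j" "j \<le> n + p - 2"
  shows "knot p n (i+p+1) < knot p n (j+1)" "0 < knot p n (j+1)"
proof -
  have e1: "knot p n (i+p+1) = real (min i n) / n" using n by (simp add: knot_eq)
  have m2: "j + 1 - (p+1) \<le> n" "j + 1 - (p+1) = j - p" using ij n by arith+
  have e2: "knot p n (j+1) = real (j - p) / n" using m2 by (simp add: knot_eq[OF n] min_absorb1)
  have "min i n < j - p" using ij by auto
  hence "real (min i n) < real (j - p)" by linarith
  thus "knot p n (i+p+1) < knot p n (j+1)" unfolding e1 e2 using n by (simp add: divide_strict_right_mono)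
  show "0 < knot p n (j+1)" unfolding e2 using n ij by simp
qed

lemma knot_supp_len:
  assumes n: "n \<ge> 1"
  shows "knot p n (j+1+p+1) - knot p n (j+1) \<le> real (p+1) / n"
proof -
  have "min (j + 1 + p + 1 - (p + 1)) n \<le> min (j + 1 - (p + 1)) n + (p + 1)" by auto
  hence "real (min (j + 1 + p + 1 - (p + 1)) n) - real (min (j + 1 - (p + 1)) n) \<le> real (p+1)" by linarith
  hence "(real (min (j + 1 + p + 1 - (p + 1)) n) - real (min (j + 1 - (p + 1)) n)) / n \<le> real (p+1) / n"
    by (rule divide_right_mono) simp
  thus ?thesis using n by (simp add: knot_eq diff_divide_distrib)
qed

lemma cont_on_0T:
  fixes f :: "real \<Rightarrow> real"
  assumes "continuous (at 0 within {0..}) f" "\<And>x. 0 < x \<Longrightarrow> x < 1 \<Longrightarrow> isCont f x" "T < 1"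
  shows "continuous_on {0..T} f"
  unfolding continuous_on_eq_continuous_within
proof
  fix x assume x: "x \<in> {0..T}"
  show "continuous (at x within {0..T}) f"
  proof (cases "x = 0")
    case True
    thus ?thesis using continuous_within_subset[OF assms(1), of "{0..T}"] by auto
  next
    case False
    hence "isCont f x" using x assms by auto
    thus ?thesis by (rule continuous_at_imp_continuous_at_within)
  qed
qed

lemma V_formula:
  assumes n: "n \<ge> 1" and p: "2 \<le> p" and \<alpha>: "1 < \<alpha>" "\<alpha> < 2" and t: "0 < t" "t < 1" and j: "1 \<le> j"
  shows "deriv (deriv (\<lambda>\<tau>. integral {0..\<tau>} (\<lambda>y. (\<tau> - y) powr (1-\<alpha>) * bspline p n p (j+1) y))) t
        = t powr (1-\<alpha>) * bsd p n p (j+1) 0 + integral {0..t} (\<lambda>y. (t-y) powr (1-\<alpha>) * bsd2 p n p (j+1) y)"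
    and "(\<lambda>y. (t-y) powr (1-\<alpha>) * bsd2 p n p (j+1) y) integrable_on {0..t}"
proof -
  define T where "T = (t + 1) / 2"
  have T: "t < T" "T < 1" using t by (auto simp: T_def)
  have b: "-1 < 1 - \<alpha>" "1 - \<alpha> < 0" using \<alpha> by auto
  have S: "finite (range (knot p n))" by (rule knot_range_finite[OF n])
  have ucont: "continuous_on {0..T} (bspline p n p (j+1))"
    by (rule cont_on_0T[OF bs_rcont[OF n] _ T(2)]) (rule bs_cont[OF n], use p in auto)
  have D1cont: "continuous_on {0..T} (bsd p n p (j+1))"
    by (rule cont_on_0T[OF bsd_rcont[OF n] _ T(2)]) (rule bsd_cont[OF n], use p in auto)
  have u0: "bspline p n p (j+1) 0 = 0"
  proof (rule ccontr)
    assume "bspline p n p (j+1) 0 \<noteq> 0"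
    from bs_at0[OF n this] j show False by simp
  qed
  define H where "H \<tau> = integral {0..\<tau>} (\<lambda>y. (\<tau> - y) powr (1-\<alpha>) * bsd p n p (j+1) y)" for \<tau>
  define F where "F \<tau> = integral {0..\<tau>} (\<lambda>y. (\<tau> - y) powr (1-\<alpha>) * bspline p n p (j+1) y)" for \<tau>
  have dF: "deriv F \<tau> = H \<tau>" if "0 < \<tau>" "\<tau> < T" for \<tau>
  proof (rule DERIV_imp_deriv)
    have "(F has_real_derivative (\<tau> powr (1-\<alpha>) * bspline p n p (j+1) 0 + H \<tau>)) (at \<tau>)"
      unfolding F_def[abs_def] H_def
      by (rule Lmain(1)[OF b that ucont _ S, where L="real p * 2^p * real n"])
         (auto intro: bs_deriv[OF n] bsd_bound[OF n])
    thus "(F has_real_derivative H \<tau>) (at \<tau>)" using u0 by simp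
  qed
  have L2: "(H has_real_derivative (t powr (1-\<alpha>) * bsd p n p (j+1) 0 + integral {0..t} (\<lambda>y. (t-y) powr (1-\<alpha>) * bsd2 p n p (j+1) y))) (at t)"
    unfolding H_def[abs_def]
    by (rule Lmain(1)[OF b t(1) T(1) D1cont _ S, where L="real p * real p * 2^p * real n ^ 2"])
       (auto intro: bsd_deriv[OF n] bsd2_bound[OF n])
  show "(\<lambda>y. (t-y) powr (1-\<alpha>) * bsd2 p n p (j+1) y) integrable_on {0..t}"
    by (rule Lmain(2)[OF b t(1) T(1) D1cont _ S, where L="real p * real p * 2^p * real n ^ 2"])
       (auto intro: bsd_deriv[OF n] bsd2_bound[OF n])
  have "deriv (deriv F) t = t powr (1-\<alpha>) * bsd p n p (j+1) 0 + integral {0..t} (\<lambda>y. (t-y) powr (1-\<alpha>) * bsd2 p n p (j+1) y)"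
  proof (rule DERIV_imp_deriv)
    show "(deriv F has_real_derivative (t powr (1-\<alpha>) * bsd p n p (j+1) 0 + integral {0..t} (\<lambda>y. (t-y) powr (1-\<alpha>) * bsd2 p n p (j+1) y))) (at t)"
      by (rule has_field_derivative_transform_within_open[OF L2, of "{0<..<T}"]) (use t T dF in auto)
  qed
  thus "deriv (deriv (\<lambda>\<tau>. integral {0..\<tau>} (\<lambda>y. (\<tau> - y) powr (1-\<alpha>) * bspline p n p (j+1) y))) t
        = t powr (1-\<alpha>) * bsd p n p (j+1) 0 + integral {0..t} (\<lambda>y. (t-y) powr (1-\<alpha>) * bsd2 p n p (j+1) y)"
    by (simp add: F_def[abs_def])
qed

lemma pw1:
  fixes x y a :: real assumes "0 < x" "0 < y"
  shows "(1/(x*y)) powr (1-a) * y = x powr (a-1) * y powr a"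
proof -
  have "(1/(x*y)) powr (1-a) = (x*y) powr (a-1)"
    using assms by (simp add: powr_divide powr_minus_divide[symmetric] powr_minus)
  also have "\<dots> = x powr (a-1) * y powr (a-1)" using assms by (simp add: powr_mult)
  finally have e: "(1/(x*y)) powr (1-a) = x powr (a-1) * y powr (a-1)" .
  have "y powr (a-1) * y = y powr a" using assms by (simp add: powr_diff)
  thus ?thesis unfolding e by (simp add: mult.assoc)
qed
lemma pw2:
  fixes c y a :: real assumes "0 \<le> c" "0 < y"
  shows "y^2 * (c / y) powr (2 - a) = c powr (2-a) * y powr a"
proof -
  have "(c / y) powr (2 - a) = c powr (2-a) / y powr (2-a)" using assms by (simp add: powr_divide)
  moreover have "y^2 / y powr (2 - a) = y powr a"
  proof -
    have e1: "y powr (2 - (2 - a)) = y powr 2 / y powr (2 - a)" by (rule powr_diff)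
    have e2: "y powr 2 = y^2" using assms by (simp add: powr_numeral)
    show ?thesis using e1 e2 by simp
  qed
  ultimately show ?thesis
  proof -
    assume e3: "(c / y) powr (2 - a) = c powr (2-a) / y powr (2-a)" and e4: "y^2 / y powr (2 - a) = y powr a"
    have "y^2 * (c / y) powr (2 - a) = y^2 / y powr (2 - a) * c powr (2-a)" unfolding e3 by simp
    thus ?thesis unfolding e4 by (simp add: mult.commute)
  qed
qed

lemma pw3:
  fixes m y a c :: real assumes "0 < m" "0 < y"
  shows "(m / y) powr (-1 - a) * (c / y) = m powr (-1 - a) * y powr a * c"
proof -
  have e1: "(m / y) powr (-1 - a) = m powr (-1 - a) / y powr (-1 - a)" using assms by (simp add: powr_divide)
  have e2: "y powr (-(1 + a)) = inverse (y powr (1 + a))" by (rule powr_minus)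
  have e3: "y powr (1 + a) = y * y powr a" using assms by (simp add: powr_add)
  have "(m / y) powr (-1 - a) * (c / y) = m powr (-1 - a) * (y powr (1 + a) / y) * c"
    unfolding e1 using e2 assms by (simp add: field_simps)
  also have "y powr (1 + a) / y = y powr a" unfolding e3 using assms by simp
  finally show ?thesis .
qed

definition Kn :: "nat \<Rightarrow> real \<Rightarrow> real" where
  "Kn p \<alpha> = real p powr (\<alpha> - 1) * real p * 2^p + real p * real p * 2^p * real (p+1) powr (2-\<alpha>) / (2-\<alpha>)"

lemma near_bound:
  assumes n: "n \<ge> 1" and p: "2 \<le> p" and \<alpha>: "1 < \<alpha>" "\<alpha> < 2" and i: "1 \<le> i" "i \<le> n+p-2" and j: "1 \<le> j"
  shows "\<bar>deriv (deriv (\<lambda>\<tau>. integral {0..\<tau>} (\<lambda>y. (\<tau> - y) powr (1-\<alpha>) * bspline p n p (j+1) y))) (greville p n (i+1))\<bar>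
    \<le> Kn p \<alpha> * real n powr \<alpha>"
proof -
  define t where "t = greville p n (i+1)"
  have tb: "1/(real p * n) \<le> t" "t < 1" using grev_bounds[OF n p i] by (auto simp: t_def)
  have pn: "0 < 1/(real p * n)" using n p by simp
  have t0: "0 < t" using tb pn by linarith
  note VF = V_formula[OF n p \<alpha> t0 tb(2) j]
  define a where "a = knot p n (j+1)"
  define b where "b = knot p n (j+1+p+1)"
  have a0: "0 \<le> a" by (simp add: a_def knot_nonneg[OF n])
  have ab: "a \<le> b" unfolding a_def b_def by (rule knot_mono[OF n]) simp
  have ba: "b - a \<le> real (p+1) / n" unfolding a_def b_def by (rule knot_supp_len[OF n])
  have I: "\<bar>integral {0..t} (\<lambda>y. (t-y) powr (1-\<alpha>) * bsd2 p n p (j+1) y)\<bar>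
      \<le> (real p * real p * 2^p * real n ^ 2) * (b - a) powr (1 - \<alpha> + 1) / (1 - \<alpha> + 1)"
    by (rule near_int_bound[OF _ _ a0 ab t0 VF(2)])
       (use \<alpha> bsd2_bound[OF n] bsd2_supp[OF n, where p=p and k=p and i="j+1"] in \<open>auto simp: a_def b_def\<close>)
  have I2: "(b - a) powr (2 - \<alpha>) \<le> (real (p+1) / n) powr (2 - \<alpha>)"
    by (rule powr_mono2) (use \<alpha> ab ba in auto)
  have Kp: "0 \<le> real p * real p * 2^p * real n ^ 2 / (2 - \<alpha>)" using \<alpha> by simp
  have I3: "\<bar>integral {0..t} (\<lambda>y. (t-y) powr (1-\<alpha>) * bsd2 p n p (j+1) y)\<bar>
      \<le> real p * real p * 2^p * real n ^ 2 * (real (p+1) / n) powr (2 - \<alpha>) / (2 - \<alpha>)"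
  proof -
    have "(real p * real p * 2^p * real n ^ 2) * (b - a) powr (1 - \<alpha> + 1) / (1 - \<alpha> + 1)
        = (real p * real p * 2^p * real n ^ 2 / (2 - \<alpha>)) * (b - a) powr (2 - \<alpha>)" by simp
    also have "\<dots> \<le> (real p * real p * 2^p * real n ^ 2 / (2 - \<alpha>)) * (real (p+1) / n) powr (2 - \<alpha>)"
      by (rule mult_left_mono[OF I2 Kp])
    finally show ?thesis using I by simp
  qed
  have D: "\<bar>t powr (1-\<alpha>) * bsd p n p (j+1) 0\<bar> \<le> (1/(real p * n)) powr (1-\<alpha>) * (real p * 2^p * n)"
  proof -
    have "\<bar>t powr (1-\<alpha>) * bsd p n p (j+1) 0\<bar> = t powr (1-\<alpha>) * \<bar>bsd p n p (j+1) 0\<bar>" by (simp add: abs_mult)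
    also have "\<dots> \<le> (1/(real p * n)) powr (1-\<alpha>) * (real p * 2^p * n)"
    proof (rule mult_mono)
      show "t powr (1-\<alpha>) \<le> (1/(real p * n)) powr (1-\<alpha>)" by (rule powr_mono2') (use \<alpha> pn tb in auto)
    qed (use bsd_bound[OF n] in auto)
    finally show ?thesis .
  qed
  have e1: "(1/(real p * n)) powr (1-\<alpha>) * (real p * 2^p * n) = real p powr (\<alpha> - 1) * real p * 2^p * real n powr \<alpha>"
  proof -
    have "(1/(real p * n)) powr (1-\<alpha>) * (real p * 2^p * n) = ((1/(real p * n)) powr (1-\<alpha>) * n) * (real p * 2^p)"
      by (simp add: ac_simps)
    also have "\<dots> = real p powr (\<alpha> - 1) * real n powr \<alpha> * (real p * 2^p)"
      using pw1[of "real p" "real n" \<alpha>] n p by simp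
    finally show ?thesis by (simp add: ac_simps)
  qed
  have e2: "real p * real p * 2^p * real n ^ 2 * (real (p+1) / n) powr (2 - \<alpha>) / (2 - \<alpha>)
      = real p * real p * 2^p * real (p+1) powr (2-\<alpha>) / (2-\<alpha>) * real n powr \<alpha>"
  proof -
    have "real p * real p * 2^p * real n ^ 2 * (real (p+1) / n) powr (2 - \<alpha>) / (2 - \<alpha>)
        = (real n ^ 2 * (real (p+1) / n) powr (2 - \<alpha>)) * (real p * real p * 2^p / (2 - \<alpha>))" by (simp add: ac_simps)
    also have "\<dots> = real (p+1) powr (2-\<alpha>) * real n powr \<alpha> * (real p * real p * 2^p / (2 - \<alpha>))"
      using pw2[of "real (p+1)" "real n" \<alpha>] n by simp
    finally show ?thesis by (simp add: ac_simps)
  qed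
  have "\<bar>deriv (deriv (\<lambda>\<tau>. integral {0..\<tau>} (\<lambda>y. (\<tau> - y) powr (1-\<alpha>) * bspline p n p (j+1) y))) t\<bar>
     \<le> \<bar>t powr (1-\<alpha>) * bsd p n p (j+1) 0\<bar> + \<bar>integral {0..t} (\<lambda>y. (t-y) powr (1-\<alpha>) * bsd2 p n p (j+1) y)\<bar>"
    unfolding VF(1) by (rule abs_triangle_ineq)
  also have "\<dots> \<le> Kn p \<alpha> * real n powr \<alpha>"
  proof -
    have kk: "Kn p \<alpha> * real n powr \<alpha> = real p powr (\<alpha> - 1) * real p * 2^p * real n powr \<alpha>
      + real p * real p * 2^p * real (p+1) powr (2-\<alpha>) / (2-\<alpha>) * real n powr \<alpha>"
      by (simp add: Kn_def distrib_right)
    show ?thesis using D[unfolded e1] I3[unfolded e2] kk by linarith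
  qed
  finally show ?thesis by (simp add: t_def)
qed

lemma left_zero:
  assumes n: "n \<ge> 1" and p: "2 \<le> p" and \<alpha>: "1 < \<alpha>" "\<alpha> < 2" and i: "1 \<le> i" "i \<le> n+p-2"
    and j: "i + p + 1 \<le> j" "j \<le> n + p - 2"
  shows "deriv (deriv (\<lambda>\<tau>. integral {0..\<tau>} (\<lambda>y. (\<tau> - y) powr (1-\<alpha>) * bspline p n p (j+1) y))) (greville p n (i+1)) = 0"
proof -
  define t where "t = greville p n (i+1)"
  have tb: "1/(real p * n) \<le> t" "t < 1" "t \<le> knot p n (i+p+1)" using grev_bounds[OF n p i] by (auto simp: t_def)
  have pn: "0 < 1/(real p * n)" using n p by simp
  have t0: "0 < t" using tb pn by linarith
  have j1: "1 \<le> j" using j by simp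
  note VF = V_formula[OF n p \<alpha> t0 tb(2) j1]
  note kl = knot_left[OF n j]
  have ta: "t < knot p n (j+1)" using tb kl by linarith
  have z1: "bsd p n p (j+1) 0 = 0"
  proof (rule ccontr)
    assume "bsd p n p (j+1) 0 \<noteq> 0"
    from bsd_supp[OF n this] kl show False by simp
  qed
  have z2: "integral {0..t} (\<lambda>y. (t-y) powr (1-\<alpha>) * bsd2 p n p (j+1) y) = integral {0..t} (\<lambda>y. 0)"
  proof (rule integral_cong)
    fix y assume y: "y \<in> {0..t}"
    have "bsd2 p n p (j+1) y = 0"
    proof (rule ccontr)
      assume "bsd2 p n p (j+1) y \<noteq> 0"
      from bsd2_supp[OF n this] y ta show False by auto
    qed
    thus "(t-y) powr (1-\<alpha>) * bsd2 p n p (j+1) y = 0" by simp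
  qed
  show ?thesis using VF(1) z1 z2 by (simp add: t_def)
qed

lemma far_bound:
  assumes n: "n \<ge> 1" and p: "2 \<le> p" and \<alpha>: "1 < \<alpha>" "\<alpha> < 2" and i: "j + p + 1 \<le> i" "i \<le> n+p-2"
    and j: "1 \<le> j"
  shows "\<bar>deriv (deriv (\<lambda>\<tau>. integral {0..\<tau>} (\<lambda>y. (\<tau> - y) powr (1-\<alpha>) * bspline p n p (j+1) y))) (greville p n (i+1))\<bar>
     \<le> 2^(p+1) * real (p+1) * real n powr \<alpha> * real (i - p - j) powr (-1-\<alpha>)"
proof -
  define t where "t = greville p n (i+1)"
  have i1: "1 \<le> i" using i by simp
  have tb: "t < 1" "knot p n (i+2) \<le> t" using grev_bounds[OF n p i1 i(2)] by (auto simp: t_def)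
  define a where "a = knot p n (j+1)"
  define b where "b = knot p n (j+1+p+1)"
  define m where "m = real (i - p - j)"
  have m0: "0 < m" using i by (simp add: m_def)
  have n0: "0 < real n" using n by simp
  have mn: "m / n \<le> t - b" using knot_gap_far[OF n i] tb by (simp add: m_def b_def)
  have mn0: "0 < m / n" using m0 n0 by simp
  have bt: "b < t" using mn mn0 by linarith
  have a0: "0 \<le> a" by (simp add: a_def knot_nonneg[OF n])
  have ab: "a \<le> b" unfolding a_def b_def by (rule knot_mono[OF n]) simp
  have b0: "0 \<le> b" using a0 ab by simp
  have ba: "b - a \<le> real (p+1) / n" unfolding a_def b_def by (rule knot_supp_len[OF n])
  have ucont: "continuous_on {0..b} (bspline p n p (j+1))"
    by (rule cont_on_0T[OF bs_rcont[OF n] _]) (use bs_cont[OF n] p bt tb in auto)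
  have uz: "bspline p n p (j+1) y = 0" if "b \<le> y" for y
  proof (rule ccontr)
    assume "bspline p n p (j+1) y \<noteq> 0"
    from bs_supp[OF n this] that show False by (simp add: b_def)
  qed
  have V: "deriv (deriv (\<lambda>\<tau>. integral {0..\<tau>} (\<lambda>y. (\<tau> - y) powr (1-\<alpha>) * bspline p n p (j+1) y))) t
      = (1-\<alpha>) * (1-\<alpha>-1) * integral {0..b} (\<lambda>y. (t - y) powr (1-\<alpha>-2) * bspline p n p (j+1) y)"
    by (rule far_deriv2[OF b0 bt ucont uz])
  have J: "\<bar>integral {0..b} (\<lambda>y. (t - y) powr (1-\<alpha>-2) * bspline p n p (j+1) y)\<bar> \<le> (t - b) powr (1-\<alpha>-2) * 2^p * (b - a)"
  proof (rule far_int_bound[OF a0 ab bt _ ucont])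
    show "1 - \<alpha> - 2 \<le> 0" using \<alpha> by simp
    show "\<bar>bspline p n p (j+1) y\<bar> \<le> 2^p" for y by (rule bs_bound[OF n])
    show "bspline p n p (j+1) y \<noteq> 0 \<Longrightarrow> a \<le> y" for y using bs_supp[OF n] by (auto simp: a_def)
  qed
  have c2: "\<bar>(1-\<alpha>) * (1-\<alpha>-1)\<bar> \<le> 2"
  proof -
    have "\<bar>(1-\<alpha>) * (1-\<alpha>-1)\<bar> = (\<alpha> - 1) * \<alpha>" using \<alpha> by (simp add: abs_mult)
    also have "\<dots> \<le> 1 * 2" using \<alpha> by (intro mult_mono) auto
    finally show ?thesis by simp
  qed
  have tbp: "(t - b) powr (1-\<alpha>-2) \<le> (m / n) powr (1-\<alpha>-2)"
    by (rule powr_mono2') (use \<alpha> mn mn0 in auto)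
  have pos1: "0 \<le> (t - b) powr (1-\<alpha>-2)" by simp
  have "\<bar>integral {0..b} (\<lambda>y. (t - y) powr (1-\<alpha>-2) * bspline p n p (j+1) y)\<bar> \<le> (m / n) powr (1-\<alpha>-2) * 2^p * (real (p+1) / n)"
  proof -
    have "(t - b) powr (1-\<alpha>-2) * 2^p * (b - a) \<le> (m / n) powr (1-\<alpha>-2) * 2^p * (real (p+1) / n)"
      by (intro mult_mono tbp ba) (use ab in auto)
    thus ?thesis using J by linarith
  qed
  also have "(m / n) powr (1-\<alpha>-2) * 2^p * (real (p+1) / n) = m powr (-1 - \<alpha>) * real n powr \<alpha> * (2^p * real (p+1))"
  proof -
    have "(m / n) powr (1-\<alpha>-2) * 2^p * (real (p+1) / n) = (m / n) powr (-1-\<alpha>) * ((2^p * real (p+1)) / n)"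
      by (simp add: algebra_simps)
    also have "\<dots> = m powr (-1 - \<alpha>) * real n powr \<alpha> * (2^p * real (p+1))" by (rule pw3[OF m0 n0])
    finally show ?thesis .
  qed
  finally have J2: "\<bar>integral {0..b} (\<lambda>y. (t - y) powr (1-\<alpha>-2) * bspline p n p (j+1) y)\<bar>
     \<le> m powr (-1 - \<alpha>) * real n powr \<alpha> * (2^p * real (p+1))" .
  have "\<bar>deriv (deriv (\<lambda>\<tau>. integral {0..\<tau>} (\<lambda>y. (\<tau> - y) powr (1-\<alpha>) * bspline p n p (j+1) y))) t\<bar>
      = \<bar>(1-\<alpha>) * (1-\<alpha>-1)\<bar> * \<bar>integral {0..b} (\<lambda>y. (t - y) powr (1-\<alpha>-2) * bspline p n p (j+1) y)\<bar>"
    unfolding V by (simp add: abs_mult)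
  also have "\<dots> \<le> 2 * (m powr (-1 - \<alpha>) * real n powr \<alpha> * (2^p * real (p+1)))"
    by (rule mult_mono[OF c2 J2]) auto
  also have "\<dots> = 2^(p+1) * real (p+1) * real n powr \<alpha> * real (i - p - j) powr (-1-\<alpha>)"
    by (simp add: m_def)
  finally show ?thesis by (simp add: t_def)
qed

lemma sum_phi_bound:
  fixes g :: "nat \<Rightarrow> int" and K1 K2 r :: real and f :: "nat \<Rightarrow> real"
  assumes J: "finite J" and inj: "inj_on g J" and K1: "0 \<le> K1" and K2: "0 \<le> K2" and r: "r < -1"
   and bnd: "\<And>x. x \<in> J \<Longrightarrow> f x \<le> (if g x \<in> {-int p..int p} then K1 else 0)
        + (if int p < g x then K2 * real (nat (g x - int p)) powr r else 0)"
  shows "sum f J \<le> (2 * real p + 1) * K1 + K2 * suminf (\<lambda>m::nat. real m powr r)"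
proof -
  define J1 where "J1 = {x\<in>J. g x \<in> {-int p..int p}}"
  define J2 where "J2 = {x\<in>J. int p < g x}"
  have s1: "sum f J \<le> sum (\<lambda>x. (if g x \<in> {-int p..int p} then K1 else 0)
        + (if int p < g x then K2 * real (nat (g x - int p)) powr r else 0)) J"
    by (rule sum_mono) (rule bnd)
  have s2: "sum (\<lambda>x. (if g x \<in> {-int p..int p} then K1 else 0)
        + (if int p < g x then K2 * real (nat (g x - int p)) powr r else 0)) J
      = sum (\<lambda>x. K1) J1 + sum (\<lambda>x. K2 * real (nat (g x - int p)) powr r) J2"
    unfolding sum.distrib J1_def J2_def sum.inter_filter[OF J] by simp
  have s3: "sum (\<lambda>x. K1) J1 \<le> (2 * real p + 1) * K1"
  proof -
    have "card J1 \<le> card {-int p..int p}"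
      by (rule card_inj_on_le[of g]) (use inj in \<open>auto simp: J1_def intro: inj_on_subset\<close>)
    hence "real (card J1) \<le> 2 * real p + 1" by simp
    thus ?thesis using K1 by (simp add: mult_right_mono)
  qed
  have s4: "sum (\<lambda>x. K2 * real (nat (g x - int p)) powr r) J2 \<le> K2 * suminf (\<lambda>m::nat. real m powr r)"
  proof -
    define h where "h x = nat (g x - int p)" for x
    have injh: "inj_on h J2"
    proof (rule inj_onI)
      fix x y assume xy: "x \<in> J2" "y \<in> J2" "h x = h y"
      hence "g x = g y" by (auto simp: h_def J2_def)
      thus "x = y" using inj xy by (auto simp: J2_def inj_on_def)
    qed
    have "sum (\<lambda>m. real m powr r) (h ` J2) = sum ((\<lambda>m. real m powr r) \<circ> h) J2"
      by (rule sum.reindex[OF injh])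
    hence "sum (\<lambda>x. real (nat (g x - int p)) powr r) J2 = sum (\<lambda>m. real m powr r) (h ` J2)"
      by (simp add: h_def comp_def)
    also have "\<dots> \<le> suminf (\<lambda>m::nat. real m powr r)"
      by (rule sum_le_suminf) (use r J in \<open>auto simp: summable_real_powr_iff J2_def\<close>)
    finally have "sum (\<lambda>x. real (nat (g x - int p)) powr r) J2 \<le> suminf (\<lambda>m::nat. real m powr r)" .
    hence "K2 * sum (\<lambda>x. real (nat (g x - int p)) powr r) J2 \<le> K2 * suminf (\<lambda>m::nat. real m powr r)"
      using K2 by (rule mult_left_mono)
    thus ?thesis by (simp add: sum_distrib_left)
  qed
  show ?thesis using s1 s2 s3 s4 by linarith
qed

lemma entry_bound:
  assumes n: "n \<ge> 1" and p: "2 \<le> p" and \<alpha>: "1 < \<alpha>" "\<alpha> < 2" and i: "1 \<le> i" "i \<le> n+p-2"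
    and j: "1 \<le> j" "j \<le> n+p-2"
  shows "\<bar>real n powr (-\<alpha>) * AL p n \<alpha> i j\<bar> \<le> (if int i - int j \<in> {-int p..int p} then Kn p \<alpha> / Gamma (2-\<alpha>) else 0)
     + (if int p < int i - int j then 2^(p+1) * real (p+1) / Gamma (2-\<alpha>) * real (nat (int i - int j - int p)) powr (-1-\<alpha>) else 0)"
proof -
  define V where "V = deriv (deriv (\<lambda>\<tau>. integral {0..\<tau>} (\<lambda>y. (\<tau> - y) powr (1-\<alpha>) * bspline p n p (j+1) y))) (greville p n (i+1))"
  define G where "G = Gamma (2 - \<alpha>)"
  have G: "0 < G" using \<alpha> by (simp add: G_def)
  have AL: "AL p n \<alpha> i j = V / G"
    by (simp add: AL_def RL_deriv_def numeral_2_eq_2 V_def G_def)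
  have nn: "real n powr (-\<alpha>) * real n powr \<alpha> = 1" using n by (simp add: powr_add[symmetric])
  have np: "0 < real n powr (-\<alpha>)" using n by simp
  have lhs: "\<bar>real n powr (-\<alpha>) * AL p n \<alpha> i j\<bar> = real n powr (-\<alpha>) * \<bar>V\<bar> / G"
    using G np by (simp add: AL abs_mult)
  have red: "real n powr (-\<alpha>) * (X * real n powr \<alpha>) / G = X / G" for X
    using nn by (simp add: mult.left_commute[of "real n powr (-\<alpha>)"])
  show ?thesis
  proof (cases "int i - int j < - int p")
    case True
    hence "i + p + 1 \<le> j" by linarith
    hence "V = 0" unfolding V_def by (rule left_zero[OF n p \<alpha> i _ j(2)])
    thus ?thesis using True lhs by simp
  next
    case False
    show ?thesis
    proof (cases "int i - int j \<le> int p")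
      case True
      have "\<bar>V\<bar> \<le> Kn p \<alpha> * real n powr \<alpha>" unfolding V_def by (rule near_bound[OF n p \<alpha> i j(1)])
      hence "real n powr (-\<alpha>) * \<bar>V\<bar> / G \<le> real n powr (-\<alpha>) * (Kn p \<alpha> * real n powr \<alpha>) / G"
        using np G by (intro divide_right_mono mult_left_mono) auto
      hence "real n powr (-\<alpha>) * \<bar>V\<bar> / G \<le> Kn p \<alpha> / G" unfolding red .
      thus ?thesis using True False lhs by (simp add: G_def)
    next
      case False2: False
      hence ij: "j + p + 1 \<le> i" by linarith
      have e: "nat (int i - int j - int p) = i - p - j" using ij by linarith
      have "\<bar>V\<bar> \<le> 2^(p+1) * real (p+1) * real n powr \<alpha> * real (i - p - j) powr (-1-\<alpha>)"
        unfolding V_def by (rule far_bound[OF n p \<alpha> ij i(2) j(1)])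
      hence "real n powr (-\<alpha>) * \<bar>V\<bar> / G \<le> real n powr (-\<alpha>) * ((2^(p+1) * real (p+1) * real (i - p - j) powr (-1-\<alpha>)) * real n powr \<alpha>) / G"
        using np G by (intro divide_right_mono mult_left_mono) (auto simp: ac_simps)
      hence "real n powr (-\<alpha>) * \<bar>V\<bar> / G \<le> 2^(p+1) * real (p+1) * real (i - p - j) powr (-1-\<alpha>) / G"
        unfolding red .
      thus ?thesis using False False2 lhs e by (simp add: G_def)
    qed
  qed
qed

lemma row_sq_bound:
  fixes B :: "nat \<Rightarrow> real" and x :: "nat \<Rightarrow> real" and A :: "nat set"
  shows "(\<Sum>j\<in>A. B j * x j)\<^sup>2 \<le> (\<Sum>j\<in>A. \<bar>B j\<bar>) * (\<Sum>j\<in>A. \<bar>B j\<bar> * (x j)\<^sup>2)"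
proof -
  have a: "\<bar>\<Sum>j\<in>A. B j * x j\<bar> \<le> (\<Sum>j\<in>A. \<bar>B j\<bar> * \<bar>x j\<bar>)"
    by (rule order_trans[OF sum_abs]) (simp add: abs_mult)
  have b: "(\<Sum>j\<in>A. B j * x j)\<^sup>2 \<le> (\<Sum>j\<in>A. \<bar>B j\<bar> * \<bar>x j\<bar>)\<^sup>2"
  proof -
    have "\<bar>\<Sum>j\<in>A. B j * x j\<bar>\<^sup>2 \<le> (\<Sum>j\<in>A. \<bar>B j\<bar> * \<bar>x j\<bar>)\<^sup>2" by (rule power_mono[OF a]) simp
    thus ?thesis by simp
  qed
  have e1: "(\<Sum>j\<in>A. \<bar>B j\<bar> * \<bar>x j\<bar>) = (\<Sum>j\<in>A. sqrt \<bar>B j\<bar> * (sqrt \<bar>B j\<bar> * \<bar>x j\<bar>))"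
    by (rule sum.cong) (simp_all add: mult.assoc[symmetric])
  have e2: "(sqrt \<bar>B j\<bar>)\<^sup>2 = \<bar>B j\<bar>" for j by simp
  have e3: "(sqrt \<bar>B j\<bar> * \<bar>x j\<bar>)\<^sup>2 = \<bar>B j\<bar> * (x j)\<^sup>2" for j by (simp add: power_mult_distrib)
  have "(\<Sum>j\<in>A. \<bar>B j\<bar> * \<bar>x j\<bar>)\<^sup>2 \<le> (\<Sum>j\<in>A. (sqrt \<bar>B j\<bar>)\<^sup>2) * (\<Sum>j\<in>A. (sqrt \<bar>B j\<bar> * \<bar>x j\<bar>)\<^sup>2)"
    unfolding e1 by (rule Cauchy_Schwarz_ineq_sum)
  thus ?thesis using b unfolding e2 e3 by linarith
qed

lemma norm2_le:
  fixes B :: "nat \<Rightarrow> nat \<Rightarrow> real"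
  assumes C0: "0 \<le> C" and row: "\<And>i. i \<in> {1..N} \<Longrightarrow> (\<Sum>j=1..N. \<bar>B i j\<bar>) \<le> C"
    and col: "\<And>j. j \<in> {1..N} \<Longrightarrow> (\<Sum>i=1..N. \<bar>B i j\<bar>) \<le> C"
  shows "norm2 N B \<le> C"
  unfolding norm2_def
proof (rule cSup_least)
  have z: "(\<Sum>j=1..N. ((\<lambda>_. 0::real) j)\<^sup>2) \<le> 1" by simp
  have mem: "sqrt (\<Sum>i = 1..N. (\<Sum>j = 1..N. B i j * (\<lambda>_. 0::real) j)\<^sup>2)
     \<in> {sqrt (\<Sum>i = 1..N. (\<Sum>j = 1..N. B i j * x j)\<^sup>2) | x. (\<Sum>j = 1..N. (x j)\<^sup>2) \<le> 1}"
    by (rule CollectI, rule exI[of _ "\<lambda>_. 0::real"], rule conjI[OF refl z])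
  show "{sqrt (\<Sum>i = 1..N. (\<Sum>j = 1..N. B i j * x j)\<^sup>2) | x. (\<Sum>j = 1..N. (x j)\<^sup>2) \<le> 1} \<noteq> {}"
    using mem by (metis empty_iff)
next
  fix s assume "s \<in> {sqrt (\<Sum>i = 1..N. (\<Sum>j = 1..N. B i j * x j)\<^sup>2) | x. (\<Sum>j = 1..N. (x j)\<^sup>2) \<le> 1}"
  then obtain x where s: "s = sqrt (\<Sum>i = 1..N. (\<Sum>j = 1..N. B i j * x j)\<^sup>2)"
    and x: "(\<Sum>j = 1..N. (x j)\<^sup>2) \<le> 1" by blast
  have "(\<Sum>i=1..N. (\<Sum>j=1..N. B i j * x j)\<^sup>2) \<le> (\<Sum>i=1..N. C * (\<Sum>j=1..N. \<bar>B i j\<bar> * (x j)\<^sup>2))"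
  proof (rule sum_mono)
    fix i assume i: "i \<in> {1..N}"
    have "(\<Sum>j=1..N. B i j * x j)\<^sup>2 \<le> (\<Sum>j=1..N. \<bar>B i j\<bar>) * (\<Sum>j=1..N. \<bar>B i j\<bar> * (x j)\<^sup>2)"
      by (rule row_sq_bound)
    also have "\<dots> \<le> C * (\<Sum>j=1..N. \<bar>B i j\<bar> * (x j)\<^sup>2)"
      by (rule mult_right_mono[OF row[OF i]]) (auto intro: sum_nonneg)
    finally show "(\<Sum>j=1..N. B i j * x j)\<^sup>2 \<le> C * (\<Sum>j=1..N. \<bar>B i j\<bar> * (x j)\<^sup>2)" .
  qed
  also have "\<dots> = C * (\<Sum>i=1..N. \<Sum>j=1..N. \<bar>B i j\<bar> * (x j)\<^sup>2)" by (rule sum_distrib_left[symmetric])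
  also have "(\<Sum>i=1..N. \<Sum>j=1..N. \<bar>B i j\<bar> * (x j)\<^sup>2) = (\<Sum>j=1..N. \<Sum>i=1..N. \<bar>B i j\<bar> * (x j)\<^sup>2)"
    by (rule sum.swap)
  also have "\<dots> = (\<Sum>j=1..N. (\<Sum>i=1..N. \<bar>B i j\<bar>) * (x j)\<^sup>2)"
    by (rule sum.cong[OF refl], rule sum_distrib_right[symmetric])
  also have "\<dots> \<le> (\<Sum>j=1..N. C * (x j)\<^sup>2)"
    by (rule sum_mono) (rule mult_right_mono[OF col], auto)
  also have "\<dots> = C * (\<Sum>j=1..N. (x j)\<^sup>2)" by (rule sum_distrib_left[symmetric])
  finally have q: "(\<Sum>i=1..N. (\<Sum>j=1..N. B i j * x j)\<^sup>2) \<le> C * (C * (\<Sum>j=1..N. (x j)\<^sup>2))"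
    using C0 by (simp add: mult_left_mono)
  have "C * (C * (\<Sum>j=1..N. (x j)\<^sup>2)) \<le> C * (C * 1)"
    using x C0 by (intro mult_left_mono) auto
  hence "(\<Sum>i=1..N. (\<Sum>j=1..N. B i j * x j)\<^sup>2) \<le> C\<^sup>2" using q by (simp add: power2_eq_square)
  hence "s \<le> sqrt (C\<^sup>2)" unfolding s by (rule real_sqrt_le_mono)
  thus "s \<le> C" using C0 by simp
qed

theorem lemma6p2:
  fixes \<alpha> :: real and p :: nat
  assumes "1 < \<alpha>" "\<alpha> < 2" "2 \<le> p"
  shows "\<exists>C. \<forall>n::nat. 1 \<le> n \<longrightarrow>
           (let N = n + p - 2; B = (\<lambda>i j. real n powr (- \<alpha>) * AL p n \<alpha> i j) in
              norm1 N B \<le> C \<and> norm2 N B \<le> C \<and> norminf N B \<le> C)"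
proof -
  define K1 where "K1 = Kn p \<alpha> / Gamma (2-\<alpha>)"
  define K2 where "K2 = 2^(p+1) * real (p+1) / Gamma (2-\<alpha>)"
  define Z where "Z = suminf (\<lambda>m::nat. real m powr (-1-\<alpha>))"
  define C where "C = (2 * real p + 1) * K1 + K2 * Z"
  have G: "0 < Gamma (2 - \<alpha>)" using assms by simp
  have Kn0: "0 \<le> Kn p \<alpha>" unfolding Kn_def using assms
    by (intro add_nonneg_nonneg mult_nonneg_nonneg divide_nonneg_nonneg) auto
  have K1: "0 \<le> K1" unfolding K1_def by (rule divide_nonneg_pos[OF Kn0 G])
  have K2: "0 \<le> K2" using G by (simp add: K2_def)
  have Z: "0 \<le> Z" unfolding Z_def
    by (rule suminf_nonneg) (use assms in \<open>auto simp: summable_real_powr_iff\<close>)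
  have C0: "0 \<le> C" using K1 K2 Z by (simp add: C_def)
  have r: "-1 - \<alpha> < -1" using assms by simp
  show ?thesis
  proof (intro exI[of _ C] allI impI)
    fix n :: nat assume n: "1 \<le> n"
    define N where "N = n + p - 2"
    define B where "B = (\<lambda>i j. real n powr (- \<alpha>) * AL p n \<alpha> i j)"
    have N1: "1 \<le> N" using n assms by (simp add: N_def)
    have eb: "\<bar>B i j\<bar> \<le> (if int i - int j \<in> {-int p..int p} then K1 else 0)
        + (if int p < int i - int j then K2 * real (nat (int i - int j - int p)) powr (-1-\<alpha>) else 0)"
      if "i \<in> {1..N}" "j \<in> {1..N}" for i j
    proof -
      have ij: "1 \<le> i" "i \<le> n+p-2" "1 \<le> j" "j \<le> n+p-2" using that by (auto simp: N_def)
      from entry_bound[OF n assms(3) assms(1,2) ij] show ?thesis unfolding B_def K1_def K2_def .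
    qed
    have row: "(\<Sum>j=1..N. \<bar>B i j\<bar>) \<le> C" if i: "i \<in> {1..N}" for i
      unfolding C_def Z_def
      by (rule sum_phi_bound[where g="\<lambda>j. int i - int j", OF _ _ K1 K2 r]) (use eb i in \<open>auto simp: inj_on_def\<close>)
    have col: "(\<Sum>i=1..N. \<bar>B i j\<bar>) \<le> C" if j: "j \<in> {1..N}" for j
      unfolding C_def Z_def
      by (rule sum_phi_bound[where g="\<lambda>i. int i - int j", OF _ _ K1 K2 r]) (use eb j in \<open>auto simp: inj_on_def\<close>)
    have n1: "norm1 N B \<le> C" unfolding norm1_def
      by (rule Max.boundedI) (use col N1 in auto)
    have ninf: "norminf N B \<le> C" unfolding norminf_def
      by (rule Max.boundedI) (use row N1 in auto)
    have n2: "norm2 N B \<le> C" by (rule norm2_le[OF C0 row col])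
    show "let N = n + p - 2; B = (\<lambda>i j. real n powr (- \<alpha>) * AL p n \<alpha> i j) in
              norm1 N B \<le> C \<and> norm2 N B \<le> C \<and> norminf N B \<le> C"
      using n1 n2 ninf by (simp add: Let_def N_def B_def)
  qed
qed

end
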